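(* Let $n\ge 3$, let $U\subseteq\mathbb{R}^n$ be an open cone, and let $f$ be a smooth function on $U$, homogeneous of degree $d>1$ ($f(\lambda x)=\lambda^d f(x)$ for $\lambda>0$), with $f>0$ and $\det(\partial^2 f/\partial x_i\partial x_j)\ne 0$ on $U$. Give $U$ the pseudo-Riemannian metric $-\frac{1}{d(d-1)}\partial^2 f/\partial x_i\partial x_j$ and $M=\{x\in U:f(x)=1\}$ the restricted metric. Let $x\in M$, let $P$ be a nondegenerate 2-plane in $T_xM$, and let $c>0$. Let $K_M(P)$ be the sectional curvature of $M$ at $P$, and let $K_U(cP)$ be the sectional curvature of $U$ at the point $cx$ on the 2-plane $cP$ (the image of $P$ under the differential of $y\mapsto cy$). Then $$K_U(cP)=\frac{1}{c^d}\Big(K_M(P)+\frac{d^2}{4}\Big).$$ *)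

theory Defs
  imports "HOL-Analysis.Analysis"
begin

text \<open>Coordinates: points of R^n are vectors real^'n; a pseudo-Riemannian metric on an
open subset is given by its Gram matrix field G :: real^'n => real^'n^'n.\<close>

definition dpartial :: "'n::finite \<Rightarrow> (real^'n \<Rightarrow> real) \<Rightarrow> real^'n \<Rightarrow> real" where
  "dpartial i f x = deriv (\<lambda>t. f (x + t *\<^sub>R axis i 1)) 0"

fun iter_partial :: "'n::finite list \<Rightarrow> (real^'n \<Rightarrow> real) \<Rightarrow> real^'n \<Rightarrow> real" where
  "iter_partial [] f = f"
| "iter_partial (i # is) f = dpartial i (iter_partial is f)"

definition smooth_on :: "(real^'n::finite) set \<Rightarrow> (real^'n \<Rightarrow> real) \<Rightarrow> bool" where
  "smooth_on U f \<longleftrightarrow> (\<forall>is. iter_partial is f differentiable_on U)"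

definition open_cone :: "(real^'n::finite) set \<Rightarrow> bool" where
  "open_cone U \<longleftrightarrow> open U \<and> (\<forall>x\<in>U. \<forall>t::real. t > 0 \<longrightarrow> t *\<^sub>R x \<in> U)"

definition hessian :: "(real^'n::finite \<Rightarrow> real) \<Rightarrow> real^'n \<Rightarrow> real^'n^'n" where
  "hessian f x = (\<chi> i j. dpartial i (dpartial j f) x)"

definition hess_metric :: "real \<Rightarrow> (real^'n::finite \<Rightarrow> real) \<Rightarrow> real^'n \<Rightarrow> real^'n^'n" where
  "hess_metric d f x = (\<chi> i j. - (1 / (d * (d - 1))) * hessian f x $ i $ j)"

definition gform :: "(real^'n::finite \<Rightarrow> real^'n^'n) \<Rightarrow> real^'n \<Rightarrow> real^'n \<Rightarrow> real^'n \<Rightarrow> real" where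
  "gform G x u v = (\<Sum>i\<in>UNIV. \<Sum>j\<in>UNIV. u $ i * G x $ i $ j * v $ j)"

text \<open>Christoffel symbols Gamma^l_{jk} of the Levi-Civita connection:
  nabla_{d_j} d_k = sum_l Gamma^l_{jk} d_l.\<close>
definition christoffel :: "(real^'n::finite \<Rightarrow> real^'n^'n) \<Rightarrow> real^'n \<Rightarrow> 'n \<Rightarrow> 'n \<Rightarrow> 'n \<Rightarrow> real" where
  "christoffel G x l j k =
     (\<Sum>m\<in>UNIV. matrix_inv (G x) $ l $ m *
        (dpartial j (\<lambda>y. G y $ m $ k) x + dpartial k (\<lambda>y. G y $ m $ j) x
         - dpartial m (\<lambda>y. G y $ j $ k) x)) / 2"

text \<open>riemann G x l i j k = l-th component of R(d_i,d_j)d_k, where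
  R(X,Y)Z = nabla_X nabla_Y Z - nabla_Y nabla_X Z - nabla_[X,Y] Z.\<close>
definition riemann :: "(real^'n::finite \<Rightarrow> real^'n^'n) \<Rightarrow> real^'n \<Rightarrow> 'n \<Rightarrow> 'n \<Rightarrow> 'n \<Rightarrow> 'n \<Rightarrow> real" where
  "riemann G x l i j k =
     dpartial i (\<lambda>y. christoffel G y l j k) x - dpartial j (\<lambda>y. christoffel G y l i k) x
     + (\<Sum>m\<in>UNIV. christoffel G x m j k * christoffel G x l i m
                  - christoffel G x m i k * christoffel G x l j m)"

definition curv_vec :: "(real^'n::finite \<Rightarrow> real^'n^'n) \<Rightarrow> real^'n \<Rightarrow> real^'n \<Rightarrow> real^'n \<Rightarrow> real^'n \<Rightarrow> real^'n" where
  "curv_vec G x X Y Z = (\<chi> l. \<Sum>i\<in>UNIV. \<Sum>j\<in>UNIV. \<Sum>k\<in>UNIV. riemann G x l i j k * X $ i * Y $ j * Z $ k)"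

definition nondeg_plane :: "(real^'n::finite \<Rightarrow> real^'n^'n) \<Rightarrow> real^'n \<Rightarrow> real^'n \<Rightarrow> real^'n \<Rightarrow> bool" where
  "nondeg_plane G x X Y \<longleftrightarrow> gform G x X X * gform G x Y Y - (gform G x X Y)\<^sup>2 \<noteq> 0"

definition sectional_curvature :: "(real^'n::finite \<Rightarrow> real^'n^'n) \<Rightarrow> real^'n \<Rightarrow> real^'n \<Rightarrow> real^'n \<Rightarrow> real" where
  "sectional_curvature G x X Y =
     gform G x (curv_vec G x X Y Y) X / (gform G x X X * gform G x Y Y - (gform G x X Y)\<^sup>2)"

definition pullback_metric :: "(real^'n::finite \<Rightarrow> real^'n^'n) \<Rightarrow> (real^'m::finite \<Rightarrow> real^'n) \<Rightarrow> real^'m \<Rightarrow> real^'m^'m" where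
  "pullback_metric G \<phi> v = (\<chi> a b. gform G (\<phi> v) (frechet_derivative \<phi> (at v) (axis a 1))
                                              (frechet_derivative \<phi> (at v) (axis b 1)))"

definition level_set :: "(real^'n::finite) set \<Rightarrow> (real^'n \<Rightarrow> real) \<Rightarrow> (real^'n) set" where
  "level_set U f = {x \<in> U. f x = 1}"

definition local_param :: "(real^'n::finite) set \<Rightarrow> (real^'m::finite) set \<Rightarrow> (real^'m \<Rightarrow> real^'n) \<Rightarrow> bool" where
  "local_param M V \<phi> \<longleftrightarrow> open V \<and> (\<forall>i. smooth_on V (\<lambda>v. \<phi> v $ i)) \<and> \<phi> ` V \<subseteq> M
     \<and> inj_on \<phi> V \<and> openin (top_of_set M) (\<phi> ` V)
     \<and> continuous_on (\<phi> ` V) (inv_into V \<phi>)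
     \<and> (\<forall>v\<in>V. inj (frechet_derivative \<phi> (at v)))"

end

theory Submission
  imports Defs
begin


lemma dpartial_hd:
  fixes F :: "real^'n::finite \<Rightarrow> real"
  assumes "(F has_derivative F') (at x)"
  shows "dpartial i F x = F' (axis i 1)"
proof -
  have l: "linear F'" using assms has_derivative_linear by blast
  have "((\<lambda>t. x + t *\<^sub>R axis i 1) has_derivative (\<lambda>t. t *\<^sub>R axis i 1)) (at (0::real))"
    by (auto intro!: derivative_eq_intros)
  from has_derivative_compose[OF this, of F F'] assms
  have "((\<lambda>t. F (x + t *\<^sub>R axis i 1)) has_derivative (\<lambda>t. F' (t *\<^sub>R axis i 1))) (at 0)" by simp
  then have "((\<lambda>t. F (x + t *\<^sub>R axis i 1)) has_field_derivative F' (axis i 1)) (at 0)"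
    by (rule has_derivative_imp_has_field_derivative) (simp add: linear_scale[OF l])
  then show ?thesis unfolding dpartial_def by (rule DERIV_imp_deriv)
qed

lemma dpartial_local:
  fixes F H :: "real^'n::finite \<Rightarrow> real"
  assumes "open S" "x \<in> S" "\<And>y. y \<in> S \<Longrightarrow> F y = H y"
  shows "dpartial i F x = dpartial i H x"
proof -
  have c: "continuous (at 0) (\<lambda>t::real. x + t *\<^sub>R axis i 1)" by (intro continuous_intros)
  have "eventually (\<lambda>t. x + t *\<^sub>R axis i 1 \<in> S) (nhds (0::real))"
  proof -
    have "((\<lambda>t::real. x + t *\<^sub>R axis i 1) \<longlongrightarrow> x) (at 0)"
      using c by (simp add: isCont_def)
    then have "eventually (\<lambda>t. x + t *\<^sub>R axis i 1 \<in> S) (at (0::real))"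
      using assms(1,2) by (simp add: tendsto_def)
    then show ?thesis using assms(2) by (simp add: eventually_nhds_conv_at)
  qed
  then have "eventually (\<lambda>t. F (x + t *\<^sub>R axis i 1) = H (x + t *\<^sub>R axis i 1)) (nhds (0::real))"
    by eventually_elim (use assms(3) in auto)
  then show ?thesis unfolding dpartial_def by (rule deriv_cong_ev) simp
qed

lemma grad_has_derivative:
  fixes F :: "real^'n::finite \<Rightarrow> real"
  assumes "F differentiable (at x)"
  shows "(F has_derivative (\<lambda>v. \<Sum>i\<in>UNIV. v$i * dpartial i F x)) (at x)"
proof -
  obtain F' where F': "(F has_derivative F') (at x)" using assms differentiable_def by blast
  have l: "linear F'" using F' has_derivative_linear by blast
  have "F' v = (\<Sum>i\<in>UNIV. v$i * dpartial i F x)" for v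
  proof -
    have "F' v = F' (\<Sum>i\<in>UNIV. v$i *\<^sub>R axis i 1)"
      using basis_expansion[of v] by (simp add: scalar_mult_eq_scaleR)
    also have "\<dots> = (\<Sum>i\<in>UNIV. v$i * F' (axis i 1))"
      by (simp add: linear_sum[OF l] linear_scale[OF l])
    finally show ?thesis using dpartial_hd[OF F'] by simp
  qed
  then show ?thesis using F' by (metis (no_types, lifting) has_derivative_eq_rhs ext)
qed

lemma smooth_diff:
  assumes "smooth_on U f" "open U" "x \<in> U"
  shows "iter_partial is f differentiable (at x)"
  using assms unfolding smooth_on_def
  by (meson differentiable_on_eq_differentiable_at)



lemma axis_sum_simp: "(\<Sum>k\<in>UNIV. (axis i (1::real)) $ k * F k) = F i"
proof -
  have "\<And>k. (axis i (1::real)) $ k * F k = (if k = i then F k else 0)" by (simp add: axis_def)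
  then show ?thesis by simp
qed

lemma line_deriv:
  fixes h :: "real^'n::finite \<Rightarrow> real"
  assumes "h differentiable (at (y + t *\<^sub>R axis i 1))"
  shows "((\<lambda>t. h (y + t *\<^sub>R axis i 1)) has_real_derivative dpartial i h (y + t *\<^sub>R axis i 1)) (at t)"
proof -
  have "((\<lambda>t. y + t *\<^sub>R axis i 1) has_derivative (\<lambda>t. t *\<^sub>R axis i 1)) (at t)"
    by (auto intro!: derivative_eq_intros)
  from has_derivative_compose[OF this grad_has_derivative[OF assms]]
  show ?thesis
  proof (rule has_derivative_imp_has_field_derivative)
    fix ta :: real
    have "(\<Sum>ia\<in>UNIV. (ta *\<^sub>R axis i 1) $ ia * dpartial ia h (y + t *\<^sub>R axis i 1))
        = ta * (\<Sum>ia\<in>UNIV. axis i 1 $ ia * dpartial ia h (y + t *\<^sub>R axis i 1))"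
      by (simp add: sum_distrib_left mult.assoc)
    then show "ta * dpartial i h (y + t *\<^sub>R axis i 1) = (\<Sum>ia\<in>UNIV. (ta *\<^sub>R axis i 1) $ ia * dpartial ia h (y + t *\<^sub>R axis i 1))"
      by (simp add: axis_sum_simp)
  qed
qed

lemma clairaut_aux:
  fixes h :: "real^'n::finite \<Rightarrow> real"
  assumes S: "open S" "x \<in> S" and hd: "\<And>y. y \<in> S \<Longrightarrow> h differentiable (at y)"
    and Pd: "(\<lambda>y. dpartial i h y) differentiable (at x)" and e: "e > 0"
  shows "\<exists>\<delta>>0. \<forall>s. 0 < s \<and> s < \<delta> \<longrightarrow>
     \<bar>(h (x + s *\<^sub>R axis i 1 + s *\<^sub>R axis j 1) - h (x + s *\<^sub>R axis i 1) - h (x + s *\<^sub>R axis j 1) + h x)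
        - s\<^sup>2 * dpartial j (\<lambda>y. dpartial i h y) x\<bar> \<le> 3 * e * s\<^sup>2"
proof -
  define P where "P = (\<lambda>y. dpartial i h y)"
  define u where "u = (axis i 1 :: real^'n)"
  define v where "v = (axis j 1 :: real^'n)"
  have nu: "norm u = 1" "norm v = 1" unfolding u_def v_def by simp_all
  define P' where "P' = (\<lambda>w. \<Sum>k\<in>UNIV. w$k * dpartial k P x)"
  have PD: "(P has_derivative P') (at x)" unfolding P'_def P_def using grad_has_derivative[OF Pd] .
  have lin: "linear P'" using PD has_derivative_linear by blast
  have P'v: "P' v = dpartial j P x" unfolding P'_def v_def by (simp add: axis_sum_simp)
  obtain d where d: "d > 0" "\<And>y. norm (y - x) < d \<Longrightarrow> norm (P y - P x - P' (y - x)) \<le> e * norm (y - x)"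
    using PD e unfolding has_derivative_at_alt by blast
  obtain r where r: "r > 0" "ball x r \<subseteq> S" using S openE by blast
  define \<delta> where "\<delta> = min d r / 3"
  have \<delta>: "\<delta> > 0" using d r by (simp add: \<delta>_def)
  have main: "\<bar>(h (x + s *\<^sub>R u + s *\<^sub>R v) - h (x + s *\<^sub>R u) - h (x + s *\<^sub>R v) + h x) - s\<^sup>2 * P' v\<bar> \<le> 3 * e * s\<^sup>2"
    if s: "0 < s" "s < \<delta>" for s
  proof -
    define g where "g = (\<lambda>t. h ((x + s *\<^sub>R v) + t *\<^sub>R u) - h (x + t *\<^sub>R u))"
    have inS: "x + a *\<^sub>R u + b *\<^sub>R v \<in> S" if "\<bar>a\<bar> \<le> s" "\<bar>b\<bar> \<le> s" for a b
    proof -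
      have "norm (a *\<^sub>R u + b *\<^sub>R v) \<le> \<bar>a\<bar> + \<bar>b\<bar>"
        using norm_triangle_ineq[of "a *\<^sub>R u" "b *\<^sub>R v"] nu by simp
      also have "\<dots> < r" using that s \<delta>_def by (auto simp: min_def split: if_splits)
      moreover have "dist x (x + w) = norm w" for w :: "real^'n" by (simp add: dist_norm)
      ultimately have "x + (a *\<^sub>R u + b *\<^sub>R v) \<in> ball x r" unfolding mem_ball by simp
      then show "x + a *\<^sub>R u + b *\<^sub>R v \<in> S" using r by (simp add: add.assoc subset_iff)
    qed
    have gd: "(g has_real_derivative (P ((x + s *\<^sub>R v) + t *\<^sub>R u) - P (x + t *\<^sub>R u))) (at t)"
      if "0 \<le> t" "t \<le> s" for t
    proof -
      have a: "(x + s *\<^sub>R v) + t *\<^sub>R u \<in> S" using inS[of t s] that s by (simp add: algebra_simps)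
      have b: "x + t *\<^sub>R u \<in> S" using inS[of t 0] that s by simp
      show ?thesis unfolding g_def P_def u_def
        by (intro derivative_intros line_deriv) (use hd a b in \<open>auto simp: u_def\<close>)
    qed
    obtain \<xi> where \<xi>: "0 < \<xi>" "\<xi> < s" "g s - g 0 = (s - 0) * (P ((x + s *\<^sub>R v) + \<xi> *\<^sub>R u) - P (x + \<xi> *\<^sub>R u))"
      using MVT2[OF s(1), of g "\<lambda>t. P ((x + s *\<^sub>R v) + t *\<^sub>R u) - P (x + t *\<^sub>R u)"] gd by auto
    have gs: "g s - g 0 = h (x + s *\<^sub>R u + s *\<^sub>R v) - h (x + s *\<^sub>R u) - h (x + s *\<^sub>R v) + h x"
      unfolding g_def by (simp add: algebra_simps)
    have n1: "norm ((x + s *\<^sub>R v + \<xi> *\<^sub>R u) - x) \<le> 2 * s"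
    proof -
      have "norm (s *\<^sub>R v + \<xi> *\<^sub>R u) \<le> s + \<xi>"
        using norm_triangle_ineq[of "s *\<^sub>R v" "\<xi> *\<^sub>R u"] nu s \<xi> by simp
      then show ?thesis using \<xi> by simp
    qed
    have n2: "norm ((x + \<xi> *\<^sub>R u) - x) \<le> s" using nu \<xi> by simp
    have dd: "2 * s < d" using s \<delta>_def by (auto simp: min_def split: if_splits)
    have E1: "norm (P (x + s *\<^sub>R v + \<xi> *\<^sub>R u) - P x - P' (s *\<^sub>R v + \<xi> *\<^sub>R u)) \<le> e * (2 * s)"
    proof -
      have "norm (P (x + s *\<^sub>R v + \<xi> *\<^sub>R u) - P x - P' ((x + s *\<^sub>R v + \<xi> *\<^sub>R u) - x))
           \<le> e * norm ((x + s *\<^sub>R v + \<xi> *\<^sub>R u) - x)"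
        by (intro d(2)) (use n1 dd in linarith)
      also have "\<dots> \<le> e * (2 * s)" using n1 e by (intro mult_left_mono) auto
      finally show ?thesis by (simp add: add.assoc)
    qed
    have E2: "norm (P (x + \<xi> *\<^sub>R u) - P x - P' (\<xi> *\<^sub>R u)) \<le> e * s"
    proof -
      have "norm (P (x + \<xi> *\<^sub>R u) - P x - P' ((x + \<xi> *\<^sub>R u) - x)) \<le> e * norm ((x + \<xi> *\<^sub>R u) - x)"
        by (intro d(2)) (use n2 dd s in linarith)
      also have "\<dots> \<le> e * s" using n2 e by (intro mult_left_mono) auto
      finally show ?thesis by simp
    qed
    have lin2: "P' (s *\<^sub>R v + \<xi> *\<^sub>R u) = s * P' v + P' (\<xi> *\<^sub>R u)"
      using lin by (simp add: linear_add linear_scale)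
    define A where "A = P (x + s *\<^sub>R v + \<xi> *\<^sub>R u) - P x - P' (s *\<^sub>R v + \<xi> *\<^sub>R u)"
    define B where "B = P (x + \<xi> *\<^sub>R u) - P x - P' (\<xi> *\<^sub>R u)"
    have "(P ((x + s *\<^sub>R v) + \<xi> *\<^sub>R u) - P (x + \<xi> *\<^sub>R u)) - s * P' v = A - B"
      unfolding A_def B_def lin2 by simp
    moreover have "\<bar>A - B\<bar> \<le> 3 * e * s"
    proof -
      have "\<bar>A - B\<bar> \<le> \<bar>A\<bar> + \<bar>B\<bar>" by (rule abs_triangle_ineq4)
      moreover have "\<bar>A\<bar> \<le> e * (2 * s)" using E1 unfolding A_def real_norm_def .
      moreover have "\<bar>B\<bar> \<le> e * s" using E2 unfolding B_def real_norm_def .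
      ultimately show ?thesis by simp
    qed
    ultimately have K: "\<bar>(P ((x + s *\<^sub>R v) + \<xi> *\<^sub>R u) - P (x + \<xi> *\<^sub>R u)) - s * P' v\<bar> \<le> 3 * e * s"
      by simp
    have "(h (x + s *\<^sub>R u + s *\<^sub>R v) - h (x + s *\<^sub>R u) - h (x + s *\<^sub>R v) + h x) - s\<^sup>2 * P' v
        = s * ((P ((x + s *\<^sub>R v) + \<xi> *\<^sub>R u) - P (x + \<xi> *\<^sub>R u)) - s * P' v)"
      using \<xi>(3) gs by (simp add: power2_eq_square right_diff_distrib)
    also have "\<bar>\<dots>\<bar> \<le> s * (3 * e * s)" unfolding abs_mult using K s by (intro mult_mono) auto
    finally show ?thesis by (simp add: power2_eq_square mult_ac)
  qed
  show ?thesis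
  proof (rule exI[of _ \<delta>], intro conjI allI impI)
    show "\<delta> > 0" by (rule \<delta>)
    fix s :: real assume "0 < s \<and> s < \<delta>"
    then have "\<bar>(h (x + s *\<^sub>R u + s *\<^sub>R v) - h (x + s *\<^sub>R u) - h (x + s *\<^sub>R v) + h x) - s\<^sup>2 * P' v\<bar> \<le> 3 * e * s\<^sup>2"
      using main by blast
    then show "\<bar>(h (x + s *\<^sub>R axis i 1 + s *\<^sub>R axis j 1) - h (x + s *\<^sub>R axis i 1) - h (x + s *\<^sub>R axis j 1) + h x)
        - s\<^sup>2 * dpartial j (\<lambda>y. dpartial i h y) x\<bar> \<le> 3 * e * s\<^sup>2"
      using P'v unfolding u_def v_def P_def by simp
  qed
qed

lemma clairaut:
  fixes h :: "real^'n::finite \<Rightarrow> real"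
  assumes S: "open S" "x \<in> S" and hd: "\<And>y. y \<in> S \<Longrightarrow> h differentiable (at y)"
    and Pd: "(\<lambda>y. dpartial i h y) differentiable (at x)" and Qd: "(\<lambda>y. dpartial j h y) differentiable (at x)"
  shows "dpartial j (\<lambda>y. dpartial i h y) x = dpartial i (\<lambda>y. dpartial j h y) x"
proof (rule ccontr)
  define A where "A = dpartial j (\<lambda>y. dpartial i h y) x"
  define B where "B = dpartial i (\<lambda>y. dpartial j h y) x"
  assume "dpartial j (\<lambda>y. dpartial i h y) x \<noteq> dpartial i (\<lambda>y. dpartial j h y) x"
  then have ne: "A \<noteq> B" unfolding A_def B_def .
  define e where "e = \<bar>A - B\<bar> / 12"
  have e: "e > 0" using ne by (simp add: e_def)
  obtain d1 where d1: "d1 > 0" "\<And>s. 0 < s \<and> s < d1 \<Longrightarrow>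
     \<bar>(h (x + s *\<^sub>R axis i 1 + s *\<^sub>R axis j 1) - h (x + s *\<^sub>R axis i 1) - h (x + s *\<^sub>R axis j 1) + h x)
        - s\<^sup>2 * A\<bar> \<le> 3 * e * s\<^sup>2"
    using clairaut_aux[OF S hd Pd e, of j] unfolding A_def by blast
  obtain d2 where d2: "d2 > 0" "\<And>s. 0 < s \<and> s < d2 \<Longrightarrow>
     \<bar>(h (x + s *\<^sub>R axis j 1 + s *\<^sub>R axis i 1) - h (x + s *\<^sub>R axis j 1) - h (x + s *\<^sub>R axis i 1) + h x)
        - s\<^sup>2 * B\<bar> \<le> 3 * e * s\<^sup>2"
    using clairaut_aux[OF S hd Qd e, of i] unfolding B_def by blast
  define s where "s = min d1 d2 / 2"
  have s: "0 < s" "s < d1" "s < d2" using d1 d2 by (auto simp: s_def min_def)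
  define D where "D = h (x + s *\<^sub>R axis i 1 + s *\<^sub>R axis j 1) - h (x + s *\<^sub>R axis i 1) - h (x + s *\<^sub>R axis j 1) + h x"
  have D2: "h (x + s *\<^sub>R axis j 1 + s *\<^sub>R axis i 1) - h (x + s *\<^sub>R axis j 1) - h (x + s *\<^sub>R axis i 1) + h x = D"
    unfolding D_def by (simp add: algebra_simps)
  have a1: "\<bar>D - s\<^sup>2 * A\<bar> \<le> 3 * e * s\<^sup>2" using d1(2)[of s] s unfolding D_def by blast
  have a2: "\<bar>D - s\<^sup>2 * B\<bar> \<le> 3 * e * s\<^sup>2" using d2(2)[of s] s D2 by simp
  have "\<bar>s\<^sup>2 * A - s\<^sup>2 * B\<bar> \<le> \<bar>D - s\<^sup>2 * A\<bar> + \<bar>D - s\<^sup>2 * B\<bar>" by linarith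
  also have "\<dots> \<le> 6 * e * s\<^sup>2" using a1 a2 by linarith
  finally have "s\<^sup>2 * \<bar>A - B\<bar> \<le> s\<^sup>2 * (\<bar>A - B\<bar> / 2)"
    unfolding e_def by (simp add: abs_mult right_diff_distrib[symmetric])
  then have "\<bar>A - B\<bar> \<le> \<bar>A - B\<bar> / 2" using s(1) by simp
  then show False using ne by simp
qed



lemma matrix_inv_props:
  fixes A :: "real^'n::finite^'n"
  assumes "det A \<noteq> 0"
  shows "A ** matrix_inv A = mat 1" "matrix_inv A ** A = mat 1"
proof -
  have "invertible A" using assms invertible_det_nz by blast
  then have "\<exists>A'. A ** A' = mat 1 \<and> A' ** A = mat 1" unfolding invertible_def by blast
  then have "A ** matrix_inv A = mat 1 \<and> matrix_inv A ** A = mat 1"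
    unfolding matrix_inv_def by (rule someI_ex)
  then show "A ** matrix_inv A = mat 1" "matrix_inv A ** A = mat 1" by auto
qed

lemma matrix_inv_entry:
  fixes A :: "real^'n::finite^'n"
  assumes "det A \<noteq> 0"
  shows "matrix_inv A $ l $ m = det (\<chi> i j. if j = l then (if i = m then 1 else 0) else A$i$j) / det A"
proof -
  define x where "x = matrix_inv A *v axis m 1"
  have "A *v x = axis m 1" unfolding x_def
    by (simp add: matrix_vector_mul_assoc matrix_inv_props[OF assms])
  then have "x = (\<chi> k. det(\<chi> i j. if j=k then (axis m 1)$i else A$i$j) / det A)"
    using cramer[OF assms] by blast
  then have "x $ l = det(\<chi> i j. if j=l then (axis m 1)$i else A$i$j) / det A" by simp
  moreover have "x $ l = matrix_inv A $ l $ m"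
    unfolding x_def by (simp add: matrix_vector_mult_def axis_def if_distrib cong: if_cong)
  moreover have "(\<chi> i j. if j=l then (axis m 1)$i else A$i$j) = (\<chi> i j. if j = l then (if i = m then 1 else 0) else A$i$j)"
    by (simp add: vec_eq_iff axis_def)
  ultimately show ?thesis by simp
qed

lemma differentiable_prod_at:
  fixes f :: "'i \<Rightarrow> 'a::real_normed_vector \<Rightarrow> real"
  assumes "finite I" "\<And>i. i \<in> I \<Longrightarrow> f i differentiable (at x)"
  shows "(\<lambda>y. \<Prod>i\<in>I. f i y) differentiable (at x)"
  using assms
proof (induction I rule: finite_induct)
  case empty then show ?case by simp
next
  case (insert a F)
  then show ?case by (simp add: differentiable_mult)
qed

lemma det_differentiable:
  fixes M :: "'a::real_normed_vector \<Rightarrow> real^'n::finite^'n"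
  assumes "\<And>i j. (\<lambda>y. M y $ i $ j) differentiable (at x)"
  shows "(\<lambda>y. det (M y)) differentiable (at x)"
  unfolding det_def
  by (intro differentiable_sum differentiable_mult differentiable_const differentiable_prod_at ballI)
     (auto simp: finite_permutations assms)

lemma matrix_inv_differentiable:
  fixes M :: "'a::real_normed_vector \<Rightarrow> real^'n::finite^'n"
  assumes "\<And>i j. (\<lambda>y. M y $ i $ j) differentiable (at x)" "det (M x) \<noteq> 0"
  shows "(\<lambda>y. matrix_inv (M y) $ l $ m) differentiable (at x)"
proof -
  have dd: "(\<lambda>y. det (M y)) differentiable (at x)" by (rule det_differentiable[OF assms(1)])
  then have "continuous (at x) (\<lambda>y. det (M y))" by (rule differentiable_imp_continuous_within)
  then obtain d where d: "d > 0" "\<And>y. dist y x < d \<Longrightarrow> det (M y) \<noteq> 0"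
  proof -
    have "\<bar>det (M x)\<bar> > 0" using assms(2) by simp
    then obtain d where "d > 0" "\<And>y. dist y x < d \<Longrightarrow> dist (det (M y)) (det (M x)) < \<bar>det (M x)\<bar>"
      using \<open>continuous (at x) (\<lambda>y. det (M y))\<close> unfolding continuous_at_eps_delta by blast
    moreover have "det (M y) \<noteq> 0" if "dist (det (M y)) (det (M x)) < \<bar>det (M x)\<bar>" for y
      using that by (auto simp: dist_real_def)
    ultimately show ?thesis using that by blast
  qed
  have dn: "(\<lambda>y. det (\<chi> i j. if j = l then (if i = m then 1 else 0) else M y$i$j)) differentiable (at x)"
    apply (rule det_differentiable)
    subgoal for i j by (cases "j = l"; cases "i = m") (simp_all add: assms(1))
    done
  have "(\<lambda>y. det (\<chi> i j. if j = l then (if i = m then 1 else 0) else M y$i$j) / det (M y)) differentiable (at x)"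
    using dn dd assms(2) by (rule differentiable_divide)
  then show ?thesis
    by (rule differentiable_transform_within[OF _ d(1), where s=UNIV, simplified])
       (simp add: matrix_inv_entry d(2))
qed



lemma dpartial_const: "dpartial i (\<lambda>y. c) x = 0"
  by (rule dpartial_hd[where F'="\<lambda>_. 0"]) simp

lemma dpartial_sum:
  fixes F :: "'a \<Rightarrow> real^'n::finite \<Rightarrow> real"
  assumes "finite I" "\<And>a. a \<in> I \<Longrightarrow> F a differentiable (at x)"
  shows "dpartial i (\<lambda>y. \<Sum>a\<in>I. F a y) x = (\<Sum>a\<in>I. dpartial i (F a) x)"
proof -
  have "((\<lambda>y. \<Sum>a\<in>I. F a y) has_derivative (\<lambda>v. \<Sum>a\<in>I. (\<Sum>k\<in>UNIV. v$k * dpartial k (F a) x))) (at x)"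
    by (intro has_derivative_sum grad_has_derivative assms)
  from dpartial_hd[OF this] show ?thesis by (simp add: axis_sum_simp)
qed

lemma dpartial_mult:
  fixes F H :: "real^'n::finite \<Rightarrow> real"
  assumes "F differentiable (at x)" "H differentiable (at x)"
  shows "dpartial i (\<lambda>y. F y * H y) x = dpartial i F x * H x + F x * dpartial i H x"
proof -
  have "((\<lambda>y. F y * H y) has_derivative (\<lambda>v. F x * (\<Sum>k\<in>UNIV. v$k * dpartial k H x) + (\<Sum>k\<in>UNIV. v$k * dpartial k F x) * H x)) (at x)"
    by (intro has_derivative_mult grad_has_derivative assms)
  from dpartial_hd[OF this] show ?thesis by (simp add: axis_sum_simp)
qed

lemma dpartial_add:
  fixes F H :: "real^'n::finite \<Rightarrow> real"
  assumes "F differentiable (at x)" "H differentiable (at x)"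
  shows "dpartial i (\<lambda>y. F y + H y) x = dpartial i F x + dpartial i H x"
proof -
  have "((\<lambda>y. F y + H y) has_derivative (\<lambda>v. (\<Sum>k\<in>UNIV. v$k * dpartial k F x) + (\<Sum>k\<in>UNIV. v$k * dpartial k H x))) (at x)"
    by (intro has_derivative_add grad_has_derivative assms)
  from dpartial_hd[OF this] show ?thesis by (simp add: axis_sum_simp)
qed

lemma dpartial_diff:
  fixes F H :: "real^'n::finite \<Rightarrow> real"
  assumes "F differentiable (at x)" "H differentiable (at x)"
  shows "dpartial i (\<lambda>y. F y - H y) x = dpartial i F x - dpartial i H x"
proof -
  have "((\<lambda>y. F y - H y) has_derivative (\<lambda>v. (\<Sum>k\<in>UNIV. v$k * dpartial k F x) - (\<Sum>k\<in>UNIV. v$k * dpartial k H x))) (at x)"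
    by (intro has_derivative_diff grad_has_derivative assms)
  from dpartial_hd[OF this] show ?thesis by (simp add: axis_sum_simp)
qed

lemma dpartial_cmult:
  fixes F :: "real^'n::finite \<Rightarrow> real"
  assumes "F differentiable (at x)"
  shows "dpartial i (\<lambda>y. c * F y) x = c * dpartial i F x"
proof -
  have "((\<lambda>y. c * F y) has_derivative (\<lambda>v. c * (\<Sum>k\<in>UNIV. v$k * dpartial k F x))) (at x)"
    by (intro has_derivative_mult_right grad_has_derivative assms)
  from dpartial_hd[OF this] show ?thesis by (simp add: axis_sum_simp)
qed

definition c1 :: "(real^'k::finite \<Rightarrow> real^'k^'k) \<Rightarrow> real^'k \<Rightarrow> 'k \<Rightarrow> 'k \<Rightarrow> 'k \<Rightarrow> real" where
  "c1 G y m j k = (dpartial j (\<lambda>z. G z $ m $ k) y + dpartial k (\<lambda>z. G z $ m $ j) y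
         - dpartial m (\<lambda>z. G z $ j $ k) y) / 2"

lemma christoffel_c1:
  "christoffel G y l j k = (\<Sum>q\<in>UNIV. matrix_inv (G y) $ l $ q * c1 G y q j k)"
  unfolding christoffel_def c1_def by (simp add: sum_divide_distrib)

locale metric_nbhd =
  fixes G :: "real^'k::finite \<Rightarrow> real^'k^'k" and S :: "(real^'k) set" and x :: "real^'k"
  assumes S: "open S" "x \<in> S"
    and Gd: "\<And>y m k. y \<in> S \<Longrightarrow> (\<lambda>z. G z $ m $ k) differentiable (at y)"
    and Gsym: "\<And>y m k. y \<in> S \<Longrightarrow> G y $ m $ k = G y $ k $ m"
    and Gdd: "\<And>j m k. (\<lambda>y. dpartial j (\<lambda>z. G z $ m $ k) y) differentiable (at x)"
    and Gdet: "\<And>y. y \<in> S \<Longrightarrow> det (G y) \<noteq> 0"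
begin

lemma c1_diff: "(\<lambda>y. c1 G y m j k) differentiable (at x)"
  unfolding c1_def by (intro differentiable_divide differentiable_add differentiable_diff Gdd) auto

lemma inv_diff: "(\<lambda>y. matrix_inv (G y) $ l $ q) differentiable (at x)"
  by (rule matrix_inv_differentiable) (use Gd Gdet S in auto)

lemma dG_sym: "dpartial i (\<lambda>z. G z $ m $ l) x = dpartial i (\<lambda>z. G z $ l $ m) x"
  by (rule dpartial_local[OF S]) (simp add: Gsym)

lemma dG_c1: "dpartial i (\<lambda>z. G z $ m $ l) x = c1 G x m i l + c1 G x l i m"
  unfolding c1_def using dG_sym[of i m l] dG_sym[of l m i] dG_sym[of m l i] by (simp add: field_simps)

lemma c1_sym: "c1 G x m i l = c1 G x m l i"
  unfolding c1_def using dG_sym by (simp add: algebra_simps)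

lemma GinvG: "(\<Sum>l\<in>UNIV. G y $ m $ l * matrix_inv (G y) $ l $ q) = (if m = q then 1 else 0)" if "y \<in> S"
proof -
  have "(G y ** matrix_inv (G y)) $ m $ q = mat 1 $ m $ q" using matrix_inv_props(1)[OF Gdet[OF that]] by simp
  then show ?thesis by (simp add: matrix_matrix_mult_def mat_def)
qed

lemma d_inv:
  "(\<Sum>l\<in>UNIV. G x $ m $ l * dpartial i (\<lambda>y. matrix_inv (G y) $ l $ q) x)
    = - (\<Sum>l\<in>UNIV. dpartial i (\<lambda>y. G y $ m $ l) x * matrix_inv (G x) $ l $ q)"
proof -
  have "dpartial i (\<lambda>y. \<Sum>l\<in>UNIV. G y $ m $ l * matrix_inv (G y) $ l $ q) x
        = dpartial i (\<lambda>y. (if m = q then 1 else 0)) x"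
    by (rule dpartial_local[OF S]) (simp add: GinvG)
  also have "\<dots> = 0" by (rule dpartial_const)
  finally have "(\<Sum>l\<in>UNIV. dpartial i (\<lambda>y. G y $ m $ l * matrix_inv (G y) $ l $ q) x) = 0"
    by (subst (asm) dpartial_sum) (auto intro!: differentiable_mult Gd S inv_diff)
  then have "(\<Sum>l\<in>UNIV. dpartial i (\<lambda>y. G y $ m $ l) x * matrix_inv (G x) $ l $ q
        + G x $ m $ l * dpartial i (\<lambda>y. matrix_inv (G y) $ l $ q) x) = 0"
    by (subst (asm) dpartial_mult) (auto intro!: Gd S inv_diff)
  then show ?thesis by (simp add: sum.distrib eq_neg_iff_add_eq_0 add.commute)
qed

lemma delta_sum: fixes m :: "'j::finite" shows "(\<Sum>q\<in>UNIV. (if m = q then 1 else 0) * (a q::real)) = a m"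
proof -
  have "\<And>q. (if m = q then 1 else 0) * a q = (if q = m then a q else 0)" by simp
  then have "(\<Sum>q\<in>UNIV. (if m = q then 1 else 0) * a q) = (\<Sum>q\<in>UNIV. if q = m then a q else 0)"
    by (intro sum.cong) auto
  also have "\<dots> = a m" by (subst sum.delta) auto
  finally show ?thesis .
qed

lemma T1:
  "(\<Sum>l\<in>UNIV. G x $ m $ l * dpartial i (\<lambda>y. christoffel G y l j k) x)
   = dpartial i (\<lambda>y. c1 G y m j k) x - (\<Sum>l\<in>UNIV. dpartial i (\<lambda>y. G y $ m $ l) x * christoffel G x l j k)"
proof -
  have D1: "dpartial i (\<lambda>y. christoffel G y l j k) x = (\<Sum>q\<in>UNIV. dpartial i (\<lambda>y. matrix_inv (G y) $ l $ q) x * c1 G x q j k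
       + matrix_inv (G x) $ l $ q * dpartial i (\<lambda>y. c1 G y q j k) x)" for l
    unfolding christoffel_c1
    by (subst dpartial_sum) (auto intro!: differentiable_mult inv_diff c1_diff sum.cong simp: dpartial_mult inv_diff c1_diff)
  have "(\<Sum>l\<in>UNIV. G x $ m $ l * dpartial i (\<lambda>y. christoffel G y l j k) x)
      = (\<Sum>l\<in>UNIV. \<Sum>q\<in>UNIV. G x $ m $ l * dpartial i (\<lambda>y. matrix_inv (G y) $ l $ q) x * c1 G x q j k
       + G x $ m $ l * matrix_inv (G x) $ l $ q * dpartial i (\<lambda>y. c1 G y q j k) x)"
    by (simp add: D1 sum_distrib_left algebra_simps)
  also have "\<dots> = (\<Sum>q\<in>UNIV. \<Sum>l\<in>UNIV. G x $ m $ l * dpartial i (\<lambda>y. matrix_inv (G y) $ l $ q) x * c1 G x q j k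
       + G x $ m $ l * matrix_inv (G x) $ l $ q * dpartial i (\<lambda>y. c1 G y q j k) x)"
    by (rule sum.swap)
  also have "\<dots> = (\<Sum>q\<in>UNIV. (\<Sum>l\<in>UNIV. G x $ m $ l * dpartial i (\<lambda>y. matrix_inv (G y) $ l $ q) x) * c1 G x q j k
       + (\<Sum>l\<in>UNIV. G x $ m $ l * matrix_inv (G x) $ l $ q) * dpartial i (\<lambda>y. c1 G y q j k) x)"
    by (simp add: sum.distrib sum_distrib_right)
  also have "\<dots> = (\<Sum>q\<in>UNIV. - ((\<Sum>l\<in>UNIV. dpartial i (\<lambda>y. G y $ m $ l) x * matrix_inv (G x) $ l $ q) * c1 G x q j k)
       + (if m = q then 1 else 0) * dpartial i (\<lambda>y. c1 G y q j k) x)"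
    by (simp only: d_inv GinvG[OF S(2)] mult_minus_left)
  also have "\<dots> = (\<Sum>q\<in>UNIV. (if m = q then 1 else 0) * dpartial i (\<lambda>y. c1 G y q j k) x)
      - (\<Sum>q\<in>UNIV. (\<Sum>l\<in>UNIV. dpartial i (\<lambda>y. G y $ m $ l) x * matrix_inv (G x) $ l $ q) * c1 G x q j k)"
    by (simp only: sum.distrib sum_negf)
  also have "(\<Sum>q\<in>UNIV. (if m = q then 1 else 0) * dpartial i (\<lambda>y. c1 G y q j k) x) = dpartial i (\<lambda>y. c1 G y m j k) x"
    by (rule delta_sum)
  also have "(\<Sum>q\<in>UNIV. (\<Sum>l\<in>UNIV. dpartial i (\<lambda>y. G y $ m $ l) x * matrix_inv (G x) $ l $ q) * c1 G x q j k)
      = (\<Sum>q\<in>UNIV. \<Sum>l\<in>UNIV. dpartial i (\<lambda>y. G y $ m $ l) x * (matrix_inv (G x) $ l $ q * c1 G x q j k))"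
    by (simp add: sum_distrib_right mult.assoc)
  also have "\<dots> = (\<Sum>l\<in>UNIV. \<Sum>q\<in>UNIV. dpartial i (\<lambda>y. G y $ m $ l) x * (matrix_inv (G x) $ l $ q * c1 G x q j k))"
    by (rule sum.swap)
  also have "\<dots> = (\<Sum>l\<in>UNIV. dpartial i (\<lambda>y. G y $ m $ l) x * christoffel G x l j k)"
    unfolding christoffel_c1 by (simp add: sum_distrib_left)
  finally show ?thesis .
qed

lemma T2: "(\<Sum>l\<in>UNIV. G x $ m $ l * christoffel G x l i p) = c1 G x m i p"
proof -
  have "(\<Sum>l\<in>UNIV. G x $ m $ l * christoffel G x l i p)
      = (\<Sum>l\<in>UNIV. \<Sum>q\<in>UNIV. G x $ m $ l * matrix_inv (G x) $ l $ q * c1 G x q i p)"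
    unfolding christoffel_c1 by (simp add: sum_distrib_left mult.assoc)
  also have "\<dots> = (\<Sum>q\<in>UNIV. \<Sum>l\<in>UNIV. G x $ m $ l * matrix_inv (G x) $ l $ q * c1 G x q i p)"
    by (rule sum.swap)
  also have "\<dots> = (\<Sum>q\<in>UNIV. (\<Sum>l\<in>UNIV. G x $ m $ l * matrix_inv (G x) $ l $ q) * c1 G x q i p)"
    by (simp add: sum_distrib_right)
  also have "\<dots> = c1 G x m i p" by (simp only: GinvG[OF S(2)] delta_sum)
  finally show ?thesis .
qed

lemma T3: "(\<Sum>l\<in>UNIV. G x $ m $ l * (\<Sum>p\<in>UNIV. christoffel G x p j k * christoffel G x l i p))
   = (\<Sum>p\<in>UNIV. christoffel G x p j k * c1 G x m i p)"
proof -
  have "(\<Sum>l\<in>UNIV. G x $ m $ l * (\<Sum>p\<in>UNIV. christoffel G x p j k * christoffel G x l i p))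
     = (\<Sum>l\<in>UNIV. \<Sum>p\<in>UNIV. christoffel G x p j k * (G x $ m $ l * christoffel G x l i p))"
    by (simp add: sum_distrib_left mult_ac)
  also have "\<dots> = (\<Sum>p\<in>UNIV. \<Sum>l\<in>UNIV. christoffel G x p j k * (G x $ m $ l * christoffel G x l i p))"
    by (rule sum.swap)
  also have "\<dots> = (\<Sum>p\<in>UNIV. christoffel G x p j k * c1 G x m i p)"
    by (simp add: sum_distrib_left[symmetric] T2)
  finally show ?thesis .
qed

lemma RL_index:
  "(\<Sum>l\<in>UNIV. G x $ m $ l * riemann G x l i j k)
   = dpartial i (\<lambda>y. c1 G y m j k) x - dpartial j (\<lambda>y. c1 G y m i k) x
     - (\<Sum>l\<in>UNIV. c1 G x l i m * christoffel G x l j k)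
     + (\<Sum>l\<in>UNIV. c1 G x l j m * christoffel G x l i k)"
proof -
  have "(\<Sum>l\<in>UNIV. G x $ m $ l * riemann G x l i j k)
     = (\<Sum>l\<in>UNIV. G x $ m $ l * dpartial i (\<lambda>y. christoffel G y l j k) x)
     - (\<Sum>l\<in>UNIV. G x $ m $ l * dpartial j (\<lambda>y. christoffel G y l i k) x)
     + (\<Sum>l\<in>UNIV. G x $ m $ l * (\<Sum>p\<in>UNIV. christoffel G x p j k * christoffel G x l i p))
     - (\<Sum>l\<in>UNIV. G x $ m $ l * (\<Sum>p\<in>UNIV. christoffel G x p i k * christoffel G x l j p))"
    unfolding riemann_def
    by (simp add: sum_subtractf right_diff_distrib distrib_left sum.distrib)
  also have "\<dots> = dpartial i (\<lambda>y. c1 G y m j k) x - (\<Sum>l\<in>UNIV. (c1 G x m i l + c1 G x l i m) * christoffel G x l j k)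
     - (dpartial j (\<lambda>y. c1 G y m i k) x - (\<Sum>l\<in>UNIV. (c1 G x m j l + c1 G x l j m) * christoffel G x l i k))
     + (\<Sum>p\<in>UNIV. christoffel G x p j k * c1 G x m i p)
     - (\<Sum>p\<in>UNIV. christoffel G x p i k * c1 G x m j p)"
    by (simp only: T1 T3 dG_c1)
  also have "\<dots> = dpartial i (\<lambda>y. c1 G y m j k) x - dpartial j (\<lambda>y. c1 G y m i k) x
     - (\<Sum>l\<in>UNIV. c1 G x l i m * christoffel G x l j k)
     + (\<Sum>l\<in>UNIV. c1 G x l j m * christoffel G x l i k)"
    by (simp add: algebra_simps sum.distrib)
  finally show ?thesis .
qed

end



lemma sw23: "(\<Sum>a\<in>A. \<Sum>b\<in>B. \<Sum>c\<in>C. f a b c) = (\<Sum>a\<in>A. \<Sum>c\<in>C. \<Sum>b\<in>B. f a b c)"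
  by (rule sum.cong[OF refl], rule sum.swap)

lemma pull3: "(\<Sum>a\<in>A. \<Sum>b\<in>B. \<Sum>c\<in>C. f a b c) = (\<Sum>c\<in>C. \<Sum>a\<in>A. \<Sum>b\<in>B. f a b c)"
proof -
  have "(\<Sum>a\<in>A. \<Sum>b\<in>B. \<Sum>c\<in>C. f a b c) = (\<Sum>a\<in>A. \<Sum>c\<in>C. \<Sum>b\<in>B. f a b c)" by (rule sw23)
  also have "\<dots> = (\<Sum>c\<in>C. \<Sum>a\<in>A. \<Sum>b\<in>B. f a b c)" by (rule sum.swap)
  finally show ?thesis .
qed

lemma pull4: "(\<Sum>a\<in>A. \<Sum>b\<in>B. \<Sum>c\<in>C. \<Sum>d\<in>D. f a b c d) = (\<Sum>d\<in>D. \<Sum>a\<in>A. \<Sum>b\<in>B. \<Sum>c\<in>C. f a b c d)"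
proof -
  have "(\<Sum>a\<in>A. \<Sum>b\<in>B. \<Sum>c\<in>C. \<Sum>d\<in>D. f a b c d) = (\<Sum>a\<in>A. \<Sum>d\<in>D. \<Sum>b\<in>B. \<Sum>c\<in>C. f a b c d)"
    by (rule sum.cong[OF refl], rule pull3)
  also have "\<dots> = (\<Sum>d\<in>D. \<Sum>a\<in>A. \<Sum>b\<in>B. \<Sum>c\<in>C. f a b c d)" by (rule sum.swap)
  finally show ?thesis .
qed

lemma pull5: "(\<Sum>a\<in>A. \<Sum>b\<in>B. \<Sum>c\<in>C. \<Sum>d\<in>D. \<Sum>e\<in>E. f a b c d e) = (\<Sum>e\<in>E. \<Sum>a\<in>A. \<Sum>b\<in>B. \<Sum>c\<in>C. \<Sum>d\<in>D. f a b c d e)"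
proof -
  have "(\<Sum>a\<in>A. \<Sum>b\<in>B. \<Sum>c\<in>C. \<Sum>d\<in>D. \<Sum>e\<in>E. f a b c d e) = (\<Sum>a\<in>A. \<Sum>e\<in>E. \<Sum>b\<in>B. \<Sum>c\<in>C. \<Sum>d\<in>D. f a b c d e)"
    by (rule sum.cong[OF refl], rule pull4)
  also have "\<dots> = (\<Sum>e\<in>E. \<Sum>a\<in>A. \<Sum>b\<in>B. \<Sum>c\<in>C. \<Sum>d\<in>D. f a b c d e)" by (rule sum.swap)
  finally show ?thesis .
qed

definition C3 :: "(real^'k::finite \<Rightarrow> real^'k^'k) \<Rightarrow> real^'k \<Rightarrow> real^'k \<Rightarrow> real^'k \<Rightarrow> real^'k \<Rightarrow> real" where
  "C3 G y w u v = (\<Sum>m\<in>UNIV. \<Sum>j\<in>UNIV. \<Sum>k\<in>UNIV. w$m * u$j * v$k * c1 G y m j k)"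

definition Cv :: "(real^'k::finite \<Rightarrow> real^'k^'k) \<Rightarrow> real^'k \<Rightarrow> real^'k \<Rightarrow> real^'k \<Rightarrow> real^'k" where
  "Cv G y u w = (\<chi> l. \<Sum>i\<in>UNIV. \<Sum>m\<in>UNIV. u$i * w$m * c1 G y l i m)"

definition invf :: "(real^'k::finite \<Rightarrow> real^'k^'k) \<Rightarrow> real^'k \<Rightarrow> real^'k \<Rightarrow> real^'k \<Rightarrow> real" where
  "invf G y s t = (\<Sum>l\<in>UNIV. \<Sum>q\<in>UNIV. s$l * matrix_inv (G y) $ l $ q * t$q)"

context metric_nbhd begin

lemma dC3: "dpartial i (\<lambda>y. C3 G y w u v) x
   = (\<Sum>m\<in>UNIV. \<Sum>j\<in>UNIV. \<Sum>k\<in>UNIV. w$m * u$j * v$k * dpartial i (\<lambda>y. c1 G y m j k) x)"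
  unfolding C3_def
  by (simp add: dpartial_sum dpartial_cmult c1_diff differentiable_sum)

lemma S12: "gform G x (curv_vec G x X Y Z) W
   = (\<Sum>m\<in>UNIV. \<Sum>i\<in>UNIV. \<Sum>j\<in>UNIV. \<Sum>k\<in>UNIV. (W$m * X$i * Y$j * Z$k) * (\<Sum>l\<in>UNIV. G x $ m $ l * riemann G x l i j k))"
proof -
  define V where "V = curv_vec G x X Y Z"
  have "gform G x V W = (\<Sum>a\<in>UNIV. \<Sum>b\<in>UNIV. V$a * G x $ a $ b * W$b)" unfolding gform_def ..
  also have "\<dots> = (\<Sum>b\<in>UNIV. \<Sum>a\<in>UNIV. V$a * G x $ a $ b * W$b)" by (rule sum.swap)
  also have "\<dots> = (\<Sum>m\<in>UNIV. W$m * (\<Sum>l\<in>UNIV. G x $ m $ l * V$l))"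
    by (simp add: sum_distrib_left Gsym[OF S(2)] mult_ac)
  also have "\<dots> = (\<Sum>m\<in>UNIV. \<Sum>i\<in>UNIV. \<Sum>j\<in>UNIV. \<Sum>k\<in>UNIV. (W$m * X$i * Y$j * Z$k) * (\<Sum>l\<in>UNIV. G x $ m $ l * riemann G x l i j k))"
  proof (rule sum.cong[OF refl])
    fix m
    have "(\<Sum>l\<in>UNIV. G x $ m $ l * V$l) = (\<Sum>l\<in>UNIV. \<Sum>i\<in>UNIV. \<Sum>j\<in>UNIV. \<Sum>k\<in>UNIV. (X$i * Y$j * Z$k) * (G x $ m $ l * riemann G x l i j k))"
      unfolding V_def curv_vec_def by (simp add: sum_distrib_left mult_ac)
    also have "\<dots> = (\<Sum>i\<in>UNIV. \<Sum>j\<in>UNIV. \<Sum>k\<in>UNIV. \<Sum>l\<in>UNIV. (X$i * Y$j * Z$k) * (G x $ m $ l * riemann G x l i j k))"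
      by (rule pull4[symmetric])
    also have "\<dots> = (\<Sum>i\<in>UNIV. \<Sum>j\<in>UNIV. \<Sum>k\<in>UNIV. (X$i * Y$j * Z$k) * (\<Sum>l\<in>UNIV. G x $ m $ l * riemann G x l i j k))"
      by (simp add: sum_distrib_left)
    finally show "W$m * (\<Sum>l\<in>UNIV. G x $ m $ l * V$l) = (\<Sum>i\<in>UNIV. \<Sum>j\<in>UNIV. \<Sum>k\<in>UNIV. (W$m * X$i * Y$j * Z$k) * (\<Sum>l\<in>UNIV. G x $ m $ l * riemann G x l i j k))"
      by (simp add: sum_distrib_left mult_ac)
  qed
  finally show ?thesis unfolding V_def .
qed

lemma RL_sect:
  "gform G x (curv_vec G x X Y Y) X
   = (\<Sum>i\<in>UNIV. X$i * dpartial i (\<lambda>y. C3 G y X Y Y) x) - (\<Sum>i\<in>UNIV. Y$i * dpartial i (\<lambda>y. C3 G y X X Y) x)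
     - invf G x (Cv G x X X) (Cv G x Y Y) + invf G x (Cv G x Y X) (Cv G x X Y)"
proof -
  define w where "w = (\<lambda>m i j k. X$m * X$i * Y$j * Y$k)"
  define dA where "dA = (\<lambda>m i j k. dpartial i (\<lambda>y. c1 G y m j k) x)"
  define dB where "dB = (\<lambda>m i j k. dpartial j (\<lambda>y. c1 G y m i k) x)"
  define Q1 where "Q1 = (\<lambda>m i j k. \<Sum>l\<in>UNIV. c1 G x l i m * christoffel G x l j k)"
  define Q2 where "Q2 = (\<lambda>m i j k. \<Sum>l\<in>UNIV. c1 G x l j m * christoffel G x l i k)"
  have "gform G x (curv_vec G x X Y Y) X
     = (\<Sum>m\<in>UNIV. \<Sum>i\<in>UNIV. \<Sum>j\<in>UNIV. \<Sum>k\<in>UNIV. w m i j k * (dA m i j k - dB m i j k - Q1 m i j k + Q2 m i j k))"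
    unfolding S12 RL_index w_def dA_def dB_def Q1_def Q2_def ..
  also have "\<dots> = (\<Sum>m\<in>UNIV. \<Sum>i\<in>UNIV. \<Sum>j\<in>UNIV. \<Sum>k\<in>UNIV. w m i j k * dA m i j k)
     - (\<Sum>m\<in>UNIV. \<Sum>i\<in>UNIV. \<Sum>j\<in>UNIV. \<Sum>k\<in>UNIV. w m i j k * dB m i j k)
     - (\<Sum>m\<in>UNIV. \<Sum>i\<in>UNIV. \<Sum>j\<in>UNIV. \<Sum>k\<in>UNIV. w m i j k * Q1 m i j k)
     + (\<Sum>m\<in>UNIV. \<Sum>i\<in>UNIV. \<Sum>j\<in>UNIV. \<Sum>k\<in>UNIV. w m i j k * Q2 m i j k)"
    by (simp add: algebra_simps sum.distrib sum_subtractf)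
  also have "(\<Sum>m\<in>UNIV. \<Sum>i\<in>UNIV. \<Sum>j\<in>UNIV. \<Sum>k\<in>UNIV. w m i j k * dA m i j k)
      = (\<Sum>i\<in>UNIV. X$i * dpartial i (\<lambda>y. C3 G y X Y Y) x)"
  proof -
    have "(\<Sum>m\<in>UNIV. \<Sum>i\<in>UNIV. \<Sum>j\<in>UNIV. \<Sum>k\<in>UNIV. w m i j k * dA m i j k)
        = (\<Sum>i\<in>UNIV. \<Sum>m\<in>UNIV. \<Sum>j\<in>UNIV. \<Sum>k\<in>UNIV. w m i j k * dA m i j k)"
      by (rule sum.swap)
    also have "\<dots> = (\<Sum>i\<in>UNIV. X$i * dpartial i (\<lambda>y. C3 G y X Y Y) x)"
      unfolding dC3 w_def dA_def by (simp add: sum_distrib_left mult_ac)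
    finally show ?thesis .
  qed
  also have "(\<Sum>m\<in>UNIV. \<Sum>i\<in>UNIV. \<Sum>j\<in>UNIV. \<Sum>k\<in>UNIV. w m i j k * dB m i j k)
      = (\<Sum>i\<in>UNIV. Y$i * dpartial i (\<lambda>y. C3 G y X X Y) x)"
  proof -
    have "(\<Sum>m\<in>UNIV. \<Sum>i\<in>UNIV. \<Sum>j\<in>UNIV. \<Sum>k\<in>UNIV. w m i j k * dB m i j k)
        = (\<Sum>j\<in>UNIV. \<Sum>m\<in>UNIV. \<Sum>i\<in>UNIV. \<Sum>k\<in>UNIV. w m i j k * dB m i j k)"
      by (rule pull3)
    also have "\<dots> = (\<Sum>i\<in>UNIV. Y$i * dpartial i (\<lambda>y. C3 G y X X Y) x)"
      unfolding dC3 w_def dB_def by (simp add: sum_distrib_left mult_ac)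
    finally show ?thesis .
  qed
  also have "(\<Sum>m\<in>UNIV. \<Sum>i\<in>UNIV. \<Sum>j\<in>UNIV. \<Sum>k\<in>UNIV. w m i j k * Q1 m i j k)
      = invf G x (Cv G x X X) (Cv G x Y Y)"
  proof -
    define F where "F = (\<lambda>m i j k l q. w m i j k * (c1 G x l i m * (matrix_inv (G x) $ l $ q * c1 G x q j k)))"
    have "(\<Sum>m\<in>UNIV. \<Sum>i\<in>UNIV. \<Sum>j\<in>UNIV. \<Sum>k\<in>UNIV. w m i j k * Q1 m i j k)
        = (\<Sum>m\<in>UNIV. \<Sum>i\<in>UNIV. \<Sum>j\<in>UNIV. \<Sum>k\<in>UNIV. \<Sum>l\<in>UNIV. \<Sum>q\<in>UNIV. F m i j k l q)"
      unfolding Q1_def F_def christoffel_c1 by (simp add: sum_distrib_left)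
    also have "\<dots> = (\<Sum>l\<in>UNIV. \<Sum>m\<in>UNIV. \<Sum>i\<in>UNIV. \<Sum>j\<in>UNIV. \<Sum>k\<in>UNIV. \<Sum>q\<in>UNIV. F m i j k l q)"
      by (rule pull5)
    also have "\<dots> = (\<Sum>l\<in>UNIV. \<Sum>q\<in>UNIV. \<Sum>m\<in>UNIV. \<Sum>i\<in>UNIV. \<Sum>j\<in>UNIV. \<Sum>k\<in>UNIV. F m i j k l q)"
      by (rule sum.cong[OF refl], rule pull5)
    also have "\<dots> = (\<Sum>l\<in>UNIV. \<Sum>q\<in>UNIV. \<Sum>i\<in>UNIV. \<Sum>m\<in>UNIV. \<Sum>j\<in>UNIV. \<Sum>k\<in>UNIV. F m i j k l q)"
      by (rule sum.cong[OF refl], rule sum.cong[OF refl], rule sum.swap)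
    also have "\<dots> = invf G x (Cv G x X X) (Cv G x Y Y)"
      unfolding invf_def Cv_def F_def w_def by (simp add: sum_distrib_left sum_distrib_right mult_ac)
    finally show ?thesis .
  qed
  also have "(\<Sum>m\<in>UNIV. \<Sum>i\<in>UNIV. \<Sum>j\<in>UNIV. \<Sum>k\<in>UNIV. w m i j k * Q2 m i j k)
      = invf G x (Cv G x Y X) (Cv G x X Y)"
  proof -
    define F where "F = (\<lambda>m i j k l q. w m i j k * (c1 G x l j m * (matrix_inv (G x) $ l $ q * c1 G x q i k)))"
    have "(\<Sum>m\<in>UNIV. \<Sum>i\<in>UNIV. \<Sum>j\<in>UNIV. \<Sum>k\<in>UNIV. w m i j k * Q2 m i j k)
        = (\<Sum>m\<in>UNIV. \<Sum>i\<in>UNIV. \<Sum>j\<in>UNIV. \<Sum>k\<in>UNIV. \<Sum>l\<in>UNIV. \<Sum>q\<in>UNIV. F m i j k l q)"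
      unfolding Q2_def F_def christoffel_c1 by (simp add: sum_distrib_left)
    also have "\<dots> = (\<Sum>l\<in>UNIV. \<Sum>m\<in>UNIV. \<Sum>i\<in>UNIV. \<Sum>j\<in>UNIV. \<Sum>k\<in>UNIV. \<Sum>q\<in>UNIV. F m i j k l q)"
      by (rule pull5)
    also have "\<dots> = (\<Sum>l\<in>UNIV. \<Sum>q\<in>UNIV. \<Sum>m\<in>UNIV. \<Sum>i\<in>UNIV. \<Sum>j\<in>UNIV. \<Sum>k\<in>UNIV. F m i j k l q)"
      by (rule sum.cong[OF refl], rule pull5)
    also have "\<dots> = (\<Sum>l\<in>UNIV. \<Sum>q\<in>UNIV. \<Sum>j\<in>UNIV. \<Sum>m\<in>UNIV. \<Sum>i\<in>UNIV. \<Sum>k\<in>UNIV. F m i j k l q)"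
      by (rule sum.cong[OF refl], rule sum.cong[OF refl], rule pull3)
    also have "\<dots> = invf G x (Cv G x Y X) (Cv G x X Y)"
      unfolding invf_def Cv_def F_def w_def by (simp add: sum_distrib_left sum_distrib_right mult_ac)
    finally show ?thesis .
  qed
  finally show ?thesis .
qed

end



lemma vec_has_derivative:
  fixes \<phi> :: "real^'m::finite \<Rightarrow> real^'n::finite"
  assumes "\<And>r. (\<lambda>z. \<phi> z $ r) differentiable (at y)"
  shows "(\<phi> has_derivative (\<lambda>v. \<chi> r. \<Sum>k\<in>UNIV. v$k * dpartial k (\<lambda>z. \<phi> z $ r) y)) (at y)"
proof -
  have "((\<lambda>x. \<phi> x \<bullet> b) has_derivative (\<lambda>x. (\<chi> r. \<Sum>k\<in>UNIV. x$k * dpartial k (\<lambda>z. \<phi> z $ r) y) \<bullet> b)) (at y)"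
    if bB: "b \<in> Basis" for b
  proof -
    obtain r where b: "b = axis r 1" using bB unfolding Basis_vec_def Basis_real_def by blast
    show ?thesis unfolding b inner_axis using grad_has_derivative[OF assms[of r]] by simp
  qed
  then show ?thesis by (subst has_derivative_componentwise_within) blast
qed

lemma dpartial_chain:
  fixes H :: "real^'n::finite \<Rightarrow> real" and \<phi> :: "real^'m::finite \<Rightarrow> real^'n"
  assumes "H differentiable (at (\<phi> y))" "\<And>r. (\<lambda>z. \<phi> z $ r) differentiable (at y)"
  shows "dpartial c (\<lambda>z. H (\<phi> z)) y = (\<Sum>r\<in>UNIV. dpartial r H (\<phi> y) * dpartial c (\<lambda>z. \<phi> z $ r) y)"
proof -
  from has_derivative_compose[OF vec_has_derivative[OF assms(2)] grad_has_derivative[OF assms(1)]]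
  have "((\<lambda>z. H (\<phi> z)) has_derivative (\<lambda>v. \<Sum>i\<in>UNIV. (\<Sum>k\<in>UNIV. v$k * dpartial k (\<lambda>z. \<phi> z $ i) y) * dpartial i H (\<phi> y))) (at y)"
    by simp
  from dpartial_hd[OF this] show ?thesis by (simp add: axis_sum_simp mult.commute)
qed

lemma dpartial_scale:
  fixes h :: "real^'n::finite \<Rightarrow> real"
  assumes "h differentiable (at (a *\<^sub>R x))"
  shows "dpartial i (\<lambda>z. h (a *\<^sub>R z)) x = a * dpartial i h (a *\<^sub>R x)"
proof -
  have "((\<lambda>z. a *\<^sub>R z) has_derivative (\<lambda>z. a *\<^sub>R z)) (at x)" by (auto intro!: derivative_eq_intros)
  from has_derivative_compose[OF this grad_has_derivative[OF assms]]
  have HD: "((\<lambda>z. h (a *\<^sub>R z)) has_derivative (\<lambda>v. \<Sum>k\<in>UNIV. (a *\<^sub>R v)$k * dpartial k h (a *\<^sub>R x))) (at x)" by simp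
  have "(\<Sum>k\<in>UNIV. (a *\<^sub>R axis i 1)$k * dpartial k h (a *\<^sub>R x)) = a * (\<Sum>k\<in>UNIV. axis i 1 $ k * dpartial k h (a *\<^sub>R x))"
    by (simp add: sum_distrib_left mult.assoc)
  with dpartial_hd[OF HD] show ?thesis by (simp only: axis_sum_simp)
qed

lemma cone_scale: "open_cone U \<Longrightarrow> x \<in> U \<Longrightarrow> t > 0 \<Longrightarrow> t *\<^sub>R x \<in> U"
  unfolding open_cone_def by blast

lemma hom_iter:
  fixes f :: "real^'n::finite \<Rightarrow> real"
  assumes cone: "open_cone U" and sm: "smooth_on U f"
    and hom: "\<forall>x\<in>U. \<forall>t::real. t > 0 \<longrightarrow> f (t *\<^sub>R x) = t powr d * f x"
  shows "\<forall>x\<in>U. \<forall>t::real. t > 0 \<longrightarrow> iter_partial is f (t *\<^sub>R x) = t powr (d - length is) * iter_partial is f x"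
proof (induction "is")
  case Nil then show ?case using hom by simp
next
  case (Cons i js)
  have oU: "open U" using cone open_cone_def by blast
  show ?case
  proof (intro ballI allI impI)
    fix x :: "real^'n" and t :: real assume x: "x \<in> U" and t: "t > 0"
    define F where "F = iter_partial js f"
    define e where "e = d - length js"
    have Fd: "F differentiable (at y)" if "y \<in> U" for y unfolding F_def using smooth_diff[OF sm oU that] .
    have txU: "t *\<^sub>R x \<in> U" using cone_scale[OF cone x t] .
    have "dpartial i (\<lambda>z. F (t *\<^sub>R z)) x = dpartial i (\<lambda>z. t powr e * F z) x"
      by (rule dpartial_local[OF oU x]) (use Cons.IH t in \<open>simp add: F_def e_def\<close>)
    then have "t * dpartial i F (t *\<^sub>R x) = t powr e * dpartial i F x"
      using dpartial_scale[OF Fd[OF txU]] dpartial_cmult[OF Fd[OF x]] by simp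
    then have "dpartial i F (t *\<^sub>R x) = t powr (e - 1) * dpartial i F x"
      using t by (simp add: powr_diff field_simps)
    moreover have "t powr (e - 1) = t powr (d - real (length (i # js)))" unfolding e_def by (simp add: algebra_simps)
    ultimately show "iter_partial (i # js) f (t *\<^sub>R x) = t powr (d - real (length (i # js))) * iter_partial (i # js) f x"
      unfolding F_def by simp
  qed
qed

lemma euler_iter:
  fixes f :: "real^'n::finite \<Rightarrow> real"
  assumes cone: "open_cone U" and sm: "smooth_on U f"
    and hom: "\<forall>x\<in>U. \<forall>t::real. t > 0 \<longrightarrow> f (t *\<^sub>R x) = t powr d * f x"
    and x: "x \<in> U"
  shows "(\<Sum>m\<in>UNIV. x$m * dpartial m (iter_partial is f) x) = (d - length is) * iter_partial is f x"
proof -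
  define F where "F = iter_partial is f"
  define e where "e = d - length is"
  have oU: "open U" using cone open_cone_def by blast
  have Fd: "F differentiable (at x)" unfolding F_def using smooth_diff[OF sm oU x] .
  have "((\<lambda>t. t *\<^sub>R x) has_derivative (\<lambda>s. s *\<^sub>R x)) (at (1::real))" by (auto intro!: derivative_eq_intros)
  moreover have Fd1: "F differentiable (at ((1::real) *\<^sub>R x))" using Fd by simp
  ultimately have "((\<lambda>t. F (t *\<^sub>R x)) has_derivative (\<lambda>s. \<Sum>k\<in>UNIV. (s *\<^sub>R x)$k * dpartial k F (1 *\<^sub>R x))) (at 1)"
    using has_derivative_compose grad_has_derivative by blast
  then have "((\<lambda>t. F (t *\<^sub>R x)) has_derivative (\<lambda>s. \<Sum>k\<in>UNIV. (s *\<^sub>R x)$k * dpartial k F x)) (at 1)" by simp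
  then have D1: "((\<lambda>t. F (t *\<^sub>R x)) has_real_derivative (\<Sum>k\<in>UNIV. x$k * dpartial k F x)) (at 1)"
    by (rule has_derivative_imp_has_field_derivative) (simp add: sum_distrib_left mult.assoc)
  have ev: "eventually (\<lambda>t. F (t *\<^sub>R x) = t powr e * F x) (nhds (1::real))"
  proof -
    have "eventually (\<lambda>t::real. t \<in> {0<..}) (nhds 1)" by (rule eventually_nhds_in_open) auto
    then show ?thesis
      by eventually_elim (use hom_iter[OF cone sm hom] x in \<open>simp add: F_def e_def\<close>)
  qed
  have "((\<lambda>t. t powr e * F x) has_real_derivative (e * 1 powr (e - 1) * F x)) (at 1)"
    by (intro derivative_eq_intros has_real_derivative_powr) auto
  then have D2: "((\<lambda>t. F (t *\<^sub>R x)) has_real_derivative (e * F x)) (at 1)"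
    using DERIV_cong_ev[OF refl ev refl] by simp
  from DERIV_unique[OF D1 D2] show ?thesis unfolding F_def e_def .
qed



lemma differentiable_local:
  assumes "F differentiable (at x)" "open S" "x \<in> S" "\<And>y. y \<in> S \<Longrightarrow> F y = H y"
  shows "H differentiable (at x)"
  using assms has_derivative_transform_within_open unfolding differentiable_def by metis

lemma matrix_inv_unique:
  fixes A :: "real^'n::finite^'n"
  assumes "det A \<noteq> 0" "A ** B = mat 1"
  shows "matrix_inv A = B"
proof -
  have "matrix_inv A = matrix_inv A ** (A ** B)" using assms(2) by simp
  also have "\<dots> = (matrix_inv A ** A) ** B" by (simp add: matrix_mul_assoc)
  also have "\<dots> = B" using matrix_inv_props(2)[OF assms(1)] by simp
  finally show ?thesis .
qed

lemma matrix_inv_scale: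
  fixes A :: "real^'n::finite^'n"
  assumes "det A \<noteq> 0" "k \<noteq> 0"
  shows "matrix_inv (k *\<^sub>R A) = (1/k) *\<^sub>R matrix_inv A"
proof (rule matrix_inv_unique)
  have "k *\<^sub>R A = (\<chi> i. k *s A $ i)" by (simp add: vec_eq_iff)
  then have "det (k *\<^sub>R A) = det (\<chi> i. k *s A $ i)" by simp
  also have "\<dots> = k ^ CARD('n) * det A" by (simp add: det_rows_mul)
  finally show "det (k *\<^sub>R A) \<noteq> 0" using assms by simp
  show "k *\<^sub>R A ** ((1/k) *\<^sub>R matrix_inv A) = mat 1"
    using assms matrix_inv_props(1)[OF assms(1)] by (simp add: matrix_scalar_ac)
qed

context metric_nbhd begin
lemma chr_diff: "(\<lambda>y. christoffel G y l j k) differentiable (at x)"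
  unfolding christoffel_c1 by (intro differentiable_sum ballI differentiable_mult inv_diff c1_diff) auto
end

locale amb =
  fixes U :: "(real^'n::finite) set" and f :: "real^'n \<Rightarrow> real" and d :: real
  assumes cone: "open_cone U" and sm: "smooth_on U f" and d1: "d > 1"
    and hom: "\<forall>x\<in>U. \<forall>t::real. t > 0 \<longrightarrow> f (t *\<^sub>R x) = t powr d * f x"
    and fpos: "\<forall>x\<in>U. f x > 0"
    and hdet: "\<forall>x\<in>U. det (hessian f x) \<noteq> 0"
begin

abbreviation "GU \<equiv> hess_metric d f"
definition "\<kappa> = - (1 / (d * (d - 1)))"

lemma oU: "open U" using cone open_cone_def by blast

lemma kappa_nz: "\<kappa> \<noteq> 0" using d1 by (simp add: \<kappa>_def)

lemma GU_entry: "GU y $ i $ j = \<kappa> * iter_partial [i, j] f y"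
  by (simp add: hess_metric_def hessian_def \<kappa>_def)

lemma ip_diff: "y \<in> U \<Longrightarrow> iter_partial is f differentiable (at y)"
  using smooth_diff[OF sm oU] by blast

lemma ip_sym2: "y \<in> U \<Longrightarrow> iter_partial (i # j # is) f y = iter_partial (j # i # is) f y"
proof -
  assume y: "y \<in> U"
  have "dpartial i (\<lambda>y. dpartial j (iter_partial is f) y) y = dpartial j (\<lambda>y. dpartial i (iter_partial is f) y) y"
    by (rule clairaut[OF oU y ip_diff]) (use ip_diff[OF y, of "j # is"] ip_diff[OF y, of "i # is"] in auto)
  then show ?thesis by simp
qed

lemma GU_sym: "y \<in> U \<Longrightarrow> GU y $ m $ k = GU y $ k $ m"
  unfolding GU_entry using ip_sym2[of y m k "[]"] by simp

lemma GU_diff: "y \<in> U \<Longrightarrow> (\<lambda>z. GU z $ m $ k) differentiable (at y)"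
  unfolding GU_entry by (intro differentiable_mult differentiable_const ip_diff)

lemma dGU: "y \<in> U \<Longrightarrow> dpartial j (\<lambda>z. GU z $ m $ k) y = \<kappa> * iter_partial [j, m, k] f y"
  unfolding GU_entry using dpartial_cmult[OF ip_diff[of y "[m,k]"], of j \<kappa>] by simp

lemma dGU_diff: "x \<in> U \<Longrightarrow> (\<lambda>y. dpartial j (\<lambda>z. GU z $ m $ k) y) differentiable (at x)"
proof -
  assume x: "x \<in> U"
  have "(\<lambda>y. \<kappa> * iter_partial [j, m, k] f y) differentiable (at x)"
    by (intro differentiable_mult differentiable_const ip_diff x)
  then show ?thesis
    by (rule differentiable_local[OF _ oU x]) (simp add: dGU)
qed

lemma GU_det: "y \<in> U \<Longrightarrow> det (GU y) \<noteq> 0"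
proof -
  assume y: "y \<in> U"
  have "GU y = (\<chi> i. \<kappa> *s (hessian f y $ i))" by (simp add: vec_eq_iff hess_metric_def \<kappa>_def)
  then have "det (GU y) = \<kappa> ^ CARD('n) * det (hessian f y)" by (simp add: det_rows_mul)
  then show ?thesis using hdet y kappa_nz by simp
qed

lemma GU_metric: "x \<in> U \<Longrightarrow> metric_nbhd GU U x"
  by unfold_locales (auto simp: oU GU_diff GU_sym dGU_diff GU_det)

lemma c1_GU: "y \<in> U \<Longrightarrow> c1 GU y m j k = \<kappa> / 2 * (iter_partial [j, m, k] f y + iter_partial [k, m, j] f y - iter_partial [m, j, k] f y)"
  unfolding c1_def by (simp add: dGU field_simps)

lemma hom_ip: "y \<in> U \<Longrightarrow> t > 0 \<Longrightarrow> iter_partial is f (t *\<^sub>R y) = t powr (d - length is) * iter_partial is f y"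
  using hom_iter[OF cone sm hom] by blast

lemma GU_scale: "y \<in> U \<Longrightarrow> t > 0 \<Longrightarrow> GU (t *\<^sub>R y) = t powr (d - 2) *\<^sub>R GU y"
  unfolding vec_eq_iff using hom_ip[of y t "[_, _]"] by (simp add: GU_entry del: iter_partial.simps)

lemma dGU_scale: "y \<in> U \<Longrightarrow> t > 0 \<Longrightarrow>
    dpartial j (\<lambda>z. GU z $ m $ k) (t *\<^sub>R y) = t powr (d - 3) * dpartial j (\<lambda>z. GU z $ m $ k) y"
  using hom_ip[of y t "[j, m, k]"] cone_scale[OF cone, of y t] by (simp add: dGU del: iter_partial.simps)

lemma inv_scale: "y \<in> U \<Longrightarrow> t > 0 \<Longrightarrow> matrix_inv (GU (t *\<^sub>R y)) = t powr (2 - d) *\<^sub>R matrix_inv (GU y)"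
  using matrix_inv_scale[OF GU_det, of y "t powr (d - 2)"]
  by (simp add: GU_scale powr_minus_divide[symmetric] powr_diff)

lemma chr_scale: "y \<in> U \<Longrightarrow> t > 0 \<Longrightarrow>
    christoffel GU (t *\<^sub>R y) l j k = t powr (-1) * christoffel GU y l j k"
proof -
  assume y: "y \<in> U" and t: "t > 0"
  have "christoffel GU (t *\<^sub>R y) l j k = (\<Sum>m\<in>UNIV. (t powr (2 - d) * matrix_inv (GU y) $ l $ m) *
        (t powr (d - 3) * (dpartial j (\<lambda>z. GU z $ m $ k) y + dpartial k (\<lambda>z. GU z $ m $ j) y
         - dpartial m (\<lambda>z. GU z $ j $ k) y))) / 2"
    unfolding christoffel_def inv_scale[OF y t] by (simp add: dGU_scale[OF y t] algebra_simps)
  also have "\<dots> = (t powr (2 - d) * t powr (d - 3)) * christoffel GU y l j k"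
    unfolding christoffel_def by (simp add: sum_distrib_left algebra_simps sum_divide_distrib)
  also have "t powr (2 - d) * t powr (d - 3) = t powr (-1)" by (simp add: powr_add[symmetric])
  finally show ?thesis .
qed

lemma dchr_scale: "y \<in> U \<Longrightarrow> t > 0 \<Longrightarrow>
    dpartial i (\<lambda>z. christoffel GU z l j k) (t *\<^sub>R y) = t powr (-2) * dpartial i (\<lambda>z. christoffel GU z l j k) y"
proof -
  assume y: "y \<in> U" and t: "t > 0"
  have ty: "t *\<^sub>R y \<in> U" using cone_scale[OF cone y t] .
  define c where "c = t powr (-1)"
  have "dpartial i (\<lambda>z. christoffel GU (t *\<^sub>R z) l j k) y = dpartial i (\<lambda>z. c * christoffel GU z l j k) y"
    by (rule dpartial_local[OF oU y]) (simp add: chr_scale t c_def)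
  moreover have "dpartial i (\<lambda>z. christoffel GU (t *\<^sub>R z) l j k) y = t * dpartial i (\<lambda>z. christoffel GU z l j k) (t *\<^sub>R y)"
    by (rule dpartial_scale[OF metric_nbhd.chr_diff[OF GU_metric[OF ty]]])
  moreover have "dpartial i (\<lambda>z. c * christoffel GU z l j k) y = c * dpartial i (\<lambda>z. christoffel GU z l j k) y"
    by (rule dpartial_cmult[OF metric_nbhd.chr_diff[OF GU_metric[OF y]]])
  ultimately have "t * dpartial i (\<lambda>z. christoffel GU z l j k) (t *\<^sub>R y) = c * dpartial i (\<lambda>z. christoffel GU z l j k) y"
    by simp
  then have "dpartial i (\<lambda>z. christoffel GU z l j k) (t *\<^sub>R y) = (c / t) * dpartial i (\<lambda>z. christoffel GU z l j k) y"
    using t by (simp add: field_simps)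
  moreover have "c / t = t powr (-2)" unfolding c_def using t by (simp add: powr_minus field_simps power2_eq_square)
  ultimately show ?thesis by simp
qed

lemma riemann_scale: "y \<in> U \<Longrightarrow> t > 0 \<Longrightarrow>
    riemann GU (t *\<^sub>R y) l i j k = t powr (-2) * riemann GU y l i j k"
proof -
  assume y: "y \<in> U" and t: "t > 0"
  define c where "c = t powr (-2)"
  have e: "t powr (-1) * a * (t powr (-1) * b) = c * (a * b)" for a b
  proof -
    have "t powr (-1) * a * (t powr (-1) * b) = (t powr (-1) * t powr (-1)) * (a * b)" by (simp add: algebra_simps)
    also have "t powr (-1) * t powr (-1) = t powr (-2)" by (simp only: powr_add[symmetric]) simp
    finally show ?thesis unfolding c_def .
  qed
  have dc: "dpartial i (\<lambda>z. christoffel GU z l j k) (t *\<^sub>R y) = c * dpartial i (\<lambda>z. christoffel GU z l j k) y" for i l j k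
    unfolding c_def by (rule dchr_scale[OF y t])
  show ?thesis unfolding riemann_def c_def[symmetric]
    by (simp only: dc chr_scale[OF y t] e)
       (simp add: sum_distrib_left right_diff_distrib distrib_left sum_subtractf)
qed

lemma sect_scale: "y \<in> U \<Longrightarrow> t > 0 \<Longrightarrow>
    sectional_curvature GU (t *\<^sub>R y) (t *\<^sub>R X) (t *\<^sub>R Y) = (1 / t powr d) * sectional_curvature GU y X Y"
proof -
  assume y: "y \<in> U" and t: "t > 0"
  have cv: "curv_vec GU (t *\<^sub>R y) (t *\<^sub>R X) (t *\<^sub>R Y) (t *\<^sub>R Y) = t *\<^sub>R curv_vec GU y X Y Y"
  proof -
    have tt: "t powr (-2) * (t * (t * t)) = t" using t by (simp add: powr_minus field_simps power2_eq_square)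
    have key: "t powr (-2) * r * (t * a) * (t * b) * (t * c) = t * (r * a * b * c)" for r a b c :: real
    proof -
      have "t powr (-2) * r * (t * a) * (t * b) * (t * c) = (t powr (-2) * (t * (t * t))) * (r * a * b * c)"
        by (simp add: algebra_simps)
      then show ?thesis by (simp only: tt)
    qed
    show ?thesis
      unfolding curv_vec_def vec_eq_iff
      by (simp only: riemann_scale[OF y t] vector_scaleR_component key sum_distrib_left vec_lambda_beta real_scaleR_def) simp
  qed
  have gf: "gform GU (t *\<^sub>R y) (t *\<^sub>R A) (t *\<^sub>R B) = t powr d * gform GU y A B" for A B
  proof -
    have tt: "t * (t * t powr (d - 2)) = t powr d" using t by (simp add: powr_diff power2_eq_square)
    have key: "t * a * (t powr (d - 2) * g) * (t * b) = t powr d * (a * g * b)" for a g b :: real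
    proof -
      have "t * a * (t powr (d - 2) * g) * (t * b) = (t * (t * t powr (d - 2))) * (a * g * b)" by (simp add: algebra_simps)
      then show ?thesis by (simp only: tt)
    qed
    show ?thesis
      unfolding gform_def GU_scale[OF y t]
      by (simp only: vector_scaleR_component real_scaleR_def key sum_distrib_left) 
  qed
  have "sectional_curvature GU (t *\<^sub>R y) (t *\<^sub>R X) (t *\<^sub>R Y)
      = (t powr d * gform GU y (curv_vec GU y X Y Y) X) /
        ((t powr d)\<^sup>2 * (gform GU y X X * gform GU y Y Y - (gform GU y X Y)\<^sup>2))"
    unfolding sectional_curvature_def cv gf by (simp add: algebra_simps power2_eq_square)
  also have "\<dots> = (1 / t powr d) * sectional_curvature GU y X Y"
    unfolding sectional_curvature_def using t by (simp add: power2_eq_square)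
  finally show ?thesis .
qed

end



lemma dotJ: "inner ((J::real^'m::finite^'n::finite) *v a) w = inner a (transpose J *v w)"
  by (metis dot_lmul_matrix inner_commute transpose_matrix_vector)

lemma LA_span:
  fixes A :: "real^'n::finite^'n" and J :: "real^'m::finite^'n" and N :: "real^'n"
  assumes card: "CARD('n) = CARD('m) + 1" and injJ: "inj ((*v) J)"
    and gNJ: "transpose J *v (A *v N) = 0" and gNN: "inner N (A *v N) = -1"
  shows "\<exists>a c. w = J *v a + c *\<^sub>R N"
proof -
  have lin: "linear ((*v) J)" by (rule matrix_vector_mul_linear)
  have sub: "subspace (range ((*v) J))" by (rule linear_subspace_image[OF lin subspace_UNIV])
  have spR: "span (range ((*v) J)) = range ((*v) J)" using sub by simp
  have dimR: "dim (range ((*v) J)) = CARD('m)"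
    using dim_image_eq[OF lin, of UNIV] injJ by simp
  have "N \<notin> span (range ((*v) J))"
  proof
    assume "N \<in> span (range ((*v) J))"
    then obtain a where a: "N = J *v a" unfolding spR by auto
    have "inner N (A *v N) = inner a (transpose J *v (A *v N))" unfolding a by (rule dotJ)
    then show False using gNN gNJ by simp
  qed
  then have "dim (insert N (range ((*v) J))) = CARD('n)" using dim_insert[of N "range ((*v) J)"] dimR card by simp
  then have "span (insert N (range ((*v) J))) = UNIV" using dim_eq_full by (metis DIM_cart DIM_real mult_1_right)
  then have "w \<in> span (insert N (range ((*v) J)))" by simp
  then obtain c where "w - c *\<^sub>R N \<in> span (range ((*v) J))" unfolding span_insert by auto
  then obtain a where "w - c *\<^sub>R N = J *v a" unfolding spR by auto
  then have "w = J *v a + c *\<^sub>R N" by (simp add: algebra_simps)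
  then show ?thesis by blast
qed

lemma inv_mul_cancel:
  fixes A :: "real^'n::finite^'n"
  assumes "det A \<noteq> 0"
  shows "matrix_inv A *v (A *v x) = x" "A *v (matrix_inv A *v x) = x"
  using matrix_inv_props[OF assms] by (simp_all add: matrix_vector_mul_assoc)

lemma LA:
  fixes A :: "real^'n::finite^'n" and J :: "real^'m::finite^'n" and N :: "real^'n"
  assumes card: "CARD('n) = CARD('m) + 1" and detA: "det A \<noteq> 0" and symA: "transpose A = A"
    and injJ: "inj ((*v) J)"
    and gNJ: "transpose J *v (A *v N) = 0" and gNN: "inner N (A *v N) = -1"
  shows "det (transpose J ** A ** J) \<noteq> 0"
    and "inner s (matrix_inv A *v t) = inner (transpose J *v s) (matrix_inv (transpose J ** A ** J) *v (transpose J *v t))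
           - inner s N * inner t N"
proof -
  define B where "B = transpose J ** A ** J"
  have Bv: "B *v a = transpose J *v (A *v (J *v a))" for a unfolding B_def by (simp add: matrix_vector_mul_assoc matrix_mul_assoc)
  have symdot: "inner x (A *v y) = inner (A *v x) y" for x y
    using dotJ[of A x y] symA by (simp add: inner_commute)
  have ker: "a = 0" if "B *v a = 0" for a
  proof -
    have "inner w (A *v (J *v a)) = 0" for w
    proof -
      obtain b c where w: "w = J *v b + c *\<^sub>R N" using LA_span[OF card injJ gNJ gNN] by blast
      have "inner (J *v b) (A *v (J *v a)) = inner b (B *v a)" unfolding Bv by (rule dotJ)
      moreover have "inner N (A *v (J *v a)) = inner a (transpose J *v (A *v N))"
        using symdot dotJ by (metis inner_commute)
      ultimately show ?thesis using that gNJ unfolding w by (simp add: inner_add_left)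
    qed
    then have "inner (A *v (J *v a)) (A *v (J *v a)) = 0" by blast
    then have "A *v (J *v a) = 0" by simp
    then have "J *v a = 0" using inv_mul_cancel(1)[OF detA, of "J *v a"] by simp
    then show "a = 0" using injJ by (metis injD matrix_vector_mult_0_right)
  qed
  have injB: "inj ((*v) B)"
  proof (rule injI)
    fix a b assume "B *v a = B *v b"
    then have "B *v (a - b) = 0" by (simp add: matrix_vector_mult_diff_distrib)
    then have "a - b = 0" by (rule ker)
    then show "a = b" by simp
  qed
  then show dB: "det (transpose J ** A ** J) \<noteq> 0"
    unfolding B_def[symmetric] using det_nz_iff_inj[OF matrix_vector_mul_linear[of B]] by simp
  define w where "w = matrix_inv A *v t"
  obtain a c where w: "w = J *v a + c *\<^sub>R N" using LA_span[OF card injJ gNJ gNN] by blast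
  have Aw: "A *v w = t" unfolding w_def by (rule inv_mul_cancel(2)[OF detA])
  have "transpose J *v t = B *v a"
  proof -
    have "transpose J *v (A *v (c *\<^sub>R N)) = c *\<^sub>R (transpose J *v (A *v N))"
      by (simp only: matrix_vector_mult_scaleR)
    then show ?thesis unfolding Aw[symmetric] w Bv using gNJ
      by (simp only: matrix_vector_right_distrib) simp
  qed
  then have a: "a = matrix_inv B *v (transpose J *v t)" using inv_mul_cancel(1)[OF dB[folded B_def]] by simp
  have "inner t N = inner w (A *v N)" unfolding Aw[symmetric] symdot[of w N] ..
  also have "\<dots> = inner a (transpose J *v (A *v N)) + c * inner N (A *v N)"
    unfolding w by (simp add: inner_add_left dotJ)
  finally have c: "c = - inner t N" using gNJ gNN by simp
  have "inner s w = inner (transpose J *v s) a + c * inner s N"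
  proof -
    have "inner s (J *v a) = inner (transpose J *v s) a" using dotJ[of J a s] by (simp only: inner_commute)
    then show ?thesis unfolding w by (simp add: inner_add_right)
  qed
  then show "inner s (matrix_inv A *v t) = inner (transpose J *v s) (matrix_inv (transpose J ** A ** J) *v (transpose J *v t))
           - inner s N * inner t N"
    unfolding w_def[symmetric] a c B_def by (simp add: mult.commute)
qed



context amb begin

lemma kappa_d1: "\<kappa> * (d - 1) = - (1 / d)"
  using d1 by (simp add: \<kappa>_def field_simps)

lemma E1: "x \<in> U \<Longrightarrow> (\<Sum>i\<in>UNIV. x$i * GU x $ i $ j) = - (1 / d) * dpartial j f x"
proof -
  assume x: "x \<in> U"
  have "(\<Sum>i\<in>UNIV. x$i * GU x $ i $ j) = \<kappa> * (\<Sum>i\<in>UNIV. x$i * dpartial i (iter_partial [j] f) x)"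
    by (simp add: GU_entry sum_distrib_left mult_ac)
  also have "\<dots> = \<kappa> * ((d - 1) * iter_partial [j] f x)"
    using euler_iter[OF cone sm hom x, of "[j]"] by simp
  also have "\<dots> = - (1 / d) * dpartial j f x" using kappa_d1 by (simp add: mult.assoc[symmetric])
  finally show ?thesis .
qed

lemma E0: "x \<in> U \<Longrightarrow> (\<Sum>j\<in>UNIV. x$j * dpartial j f x) = d * f x"
  using euler_iter[OF cone sm hom, of x "[]"] by simp

lemma E3: "x \<in> U \<Longrightarrow> gform GU x x x = - f x"
proof -
  assume x: "x \<in> U"
  have "gform GU x x x = (\<Sum>j\<in>UNIV. (\<Sum>i\<in>UNIV. x$i * GU x $ i $ j) * x$j)"
    unfolding gform_def by (subst sum.swap) (simp add: sum_distrib_right)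
  also have "\<dots> = - (1 / d) * (\<Sum>j\<in>UNIV. x$j * dpartial j f x)"
    by (simp add: E1[OF x] sum_distrib_left mult_ac)
  also have "\<dots> = - f x" using E0[OF x] d1 by simp
  finally show ?thesis .
qed

lemma c1_x: "x \<in> U \<Longrightarrow> (\<Sum>m\<in>UNIV. x$m * c1 GU x m j k) = (d - 2) / 2 * GU x $ j $ k"
proof -
  assume x: "x \<in> U"
  have s1: "(\<Sum>m\<in>UNIV. x$m * iter_partial [m, j, k] f x) = (d - 2) * iter_partial [j, k] f x"
    using euler_iter[OF cone sm hom x, of "[j, k]"] by simp
  have s2: "(\<Sum>m\<in>UNIV. x$m * iter_partial [j, m, k] f x) = (d - 2) * iter_partial [j, k] f x"
    using s1 ip_sym2[OF x, of j _ "[k]"] by simp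
  have s3: "(\<Sum>m\<in>UNIV. x$m * iter_partial [k, m, j] f x) = (d - 2) * iter_partial [j, k] f x"
  proof -
    have "(\<Sum>m\<in>UNIV. x$m * iter_partial [k, m, j] f x) = (\<Sum>m\<in>UNIV. x$m * iter_partial [m, k, j] f x)"
      using ip_sym2[OF x, of k _ "[j]"] by simp
    also have "\<dots> = (d - 2) * iter_partial [k, j] f x"
      using euler_iter[OF cone sm hom x, of "[k, j]"] by simp
    also have "iter_partial [k, j] f x = iter_partial [j, k] f x" using ip_sym2[OF x, of k j "[]"] by simp
    finally show ?thesis .
  qed
  have "(\<Sum>m\<in>UNIV. x$m * c1 GU x m j k) = \<kappa> / 2 * ((\<Sum>m\<in>UNIV. x$m * iter_partial [j, m, k] f x)
        + (\<Sum>m\<in>UNIV. x$m * iter_partial [k, m, j] f x) - (\<Sum>m\<in>UNIV. x$m * iter_partial [m, j, k] f x))"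
    by (simp add: c1_GU[OF x] sum_distrib_left sum.distrib sum_subtractf algebra_simps del: iter_partial.simps)
  also have "\<dots> = (d - 2) / 2 * GU x $ j $ k"
    unfolding s1 s2 s3 GU_entry by (simp add: algebra_simps del: iter_partial.simps)
  finally show ?thesis .
qed

lemma E2: "x \<in> U \<Longrightarrow> C3 GU x x u w = (d - 2) / 2 * gform GU x u w"
proof -
  assume x: "x \<in> U"
  have "C3 GU x x u w = (\<Sum>m\<in>UNIV. \<Sum>j\<in>UNIV. \<Sum>k\<in>UNIV. u$j * w$k * (x$m * c1 GU x m j k))"
    unfolding C3_def by (simp add: mult_ac)
  also have "\<dots> = (\<Sum>j\<in>UNIV. \<Sum>k\<in>UNIV. \<Sum>m\<in>UNIV. u$j * w$k * (x$m * c1 GU x m j k))"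
    by (rule pull3[symmetric])
  also have "\<dots> = (\<Sum>j\<in>UNIV. \<Sum>k\<in>UNIV. u$j * w$k * ((d - 2) / 2 * GU x $ j $ k))"
    by (simp add: sum_distrib_left[symmetric] c1_x[OF x])
  also have "\<dots> = (d - 2) / 2 * gform GU x u w"
    unfolding gform_def by (simp add: sum_distrib_left mult_ac)
  finally show ?thesis .
qed

end



locale hyp = amb U f d for U :: "(real^'n::finite) set" and f d +
  fixes V :: "(real^'m::finite) set" and \<phi> :: "real^'m \<Rightarrow> real^'n" and p :: "real^'m"
  assumes card: "CARD('n) = CARD('m) + 1" and lp: "local_param (level_set U f) V \<phi>" and pV: "p \<in> V"
begin

lemma oV: "open V" using lp local_param_def by blast
lemma phU: "v \<in> V \<Longrightarrow> \<phi> v \<in> U" using lp unfolding local_param_def level_set_def by blast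
lemma phf: "v \<in> V \<Longrightarrow> f (\<phi> v) = 1" using lp unfolding local_param_def level_set_def by blast
lemma ph_ip: "v \<in> V \<Longrightarrow> iter_partial is (\<lambda>z. \<phi> z $ i) differentiable (at v)"
  using lp unfolding local_param_def using smooth_diff[OF _ oV] by blast
lemma ph_diff: "v \<in> V \<Longrightarrow> (\<lambda>z. \<phi> z $ i) differentiable (at v)"
  using ph_ip[of v "[]"] by simp
lemma injD: "v \<in> V \<Longrightarrow> inj (frechet_derivative \<phi> (at v))"
  using lp unfolding local_param_def by blast

definition "P a i v = dpartial a (\<lambda>z. \<phi> z $ i) v"
definition "Pv a v = (\<chi> i. P a i v)"
definition "Jm v = (\<chi> i a. P a i v)"
definition "P2 a b i v = dpartial a (\<lambda>z. P b i z) v"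
definition "Phi2 v u w = (\<chi> i. \<Sum>a\<in>UNIV. \<Sum>b\<in>UNIV. u$a * w$b * P2 a b i v)"
definition "Phi3 v x u w = (\<chi> i. \<Sum>c\<in>UNIV. \<Sum>a\<in>UNIV. \<Sum>b\<in>UNIV. x$c * u$a * w$b * dpartial c (\<lambda>z. P2 a b i z) v)"

lemma P_ip: "P a i v = iter_partial [a] (\<lambda>z. \<phi> z $ i) v" by (simp add: P_def)
lemma P2_ip: "P2 a b i v = iter_partial [a, b] (\<lambda>z. \<phi> z $ i) v" by (simp add: P2_def P_def[abs_def])
lemma P_diff: "v \<in> V \<Longrightarrow> (\<lambda>z. P a i z) differentiable (at v)"
  using ph_ip[of v "[a]"] by (simp add: P_def[abs_def])
lemma P2_diff: "v \<in> V \<Longrightarrow> (\<lambda>z. P2 a b i z) differentiable (at v)"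
  using ph_ip[of v "[a, b]"] by (simp add: P2_def[abs_def] P_def[abs_def])

lemma ph_hd: "v \<in> V \<Longrightarrow> (\<phi> has_derivative (\<lambda>w. Jm v *v w)) (at v)"
proof -
  assume v: "v \<in> V"
  have "(\<lambda>w. Jm v *v w) = (\<lambda>w. \<chi> r. \<Sum>k\<in>UNIV. w$k * dpartial k (\<lambda>z. \<phi> z $ r) v)"
    by (auto simp: Jm_def P_def matrix_vector_mult_def vec_eq_iff mult.commute)
  then show ?thesis using vec_has_derivative[of \<phi> v] ph_diff[OF v] by simp
qed

lemma fd: "v \<in> V \<Longrightarrow> frechet_derivative \<phi> (at v) = (\<lambda>w. Jm v *v w)"
  by (rule frechet_derivative_at[OF ph_hd, symmetric])

lemma injJ: "v \<in> V \<Longrightarrow> inj ((*v) (Jm v))"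
proof -
  assume v: "v \<in> V"
  show ?thesis using injD[OF v] unfolding fd[OF v] by simp
qed

lemma Jm_axis: "Jm v *v axis a 1 = Pv a v"
  by (simp add: Jm_def Pv_def matrix_vector_mult_def vec_eq_iff axis_sum_simp mult.commute)

lemma Gm_entry: "v \<in> V \<Longrightarrow> pullback_metric GU \<phi> v $ a $ b = gform GU (\<phi> v) (Pv a v) (Pv b v)"
  by (simp add: pullback_metric_def fd Jm_axis)

lemma P2_sym: "v \<in> V \<Longrightarrow> P2 a b i v = P2 b a i v"
  unfolding P2_def P_def
  by (rule clairaut[OF oV _ ph_diff]) (auto intro: P_diff[unfolded P_def])

lemma Gm_matrix: "v \<in> V \<Longrightarrow> pullback_metric GU \<phi> v = transpose (Jm v) ** GU (\<phi> v) ** Jm v"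
proof -
  assume v: "v \<in> V"
  have "(transpose (Jm v) ** GU (\<phi> v) ** Jm v) $ a $ b = pullback_metric GU \<phi> v $ a $ b" for a b
  proof -
    have "(transpose (Jm v) ** GU (\<phi> v) ** Jm v) $ a $ b = (\<Sum>k\<in>UNIV. (\<Sum>i\<in>UNIV. P a i v * GU (\<phi> v) $ i $ k) * P b k v)"
      by (simp add: matrix_matrix_mult_def transpose_def Jm_def)
    also have "\<dots> = (\<Sum>k\<in>UNIV. \<Sum>i\<in>UNIV. P a i v * GU (\<phi> v) $ i $ k * P b k v)" by (simp add: sum_distrib_right)
    also have "\<dots> = (\<Sum>i\<in>UNIV. \<Sum>k\<in>UNIV. P a i v * GU (\<phi> v) $ i $ k * P b k v)" by (rule sum.swap)
    also have "\<dots> = pullback_metric GU \<phi> v $ a $ b" by (simp add: Gm_entry[OF v] gform_def Pv_def)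
    finally show ?thesis .
  qed
  then show ?thesis by (simp add: vec_eq_iff)
qed

lemma f_diff: "v \<in> V \<Longrightarrow> f differentiable (at (\<phi> v))"
  using ip_diff[OF phU, of v "[]"] by simp

lemma tangent: "v \<in> V \<Longrightarrow> (\<Sum>j\<in>UNIV. dpartial j f (\<phi> v) * P a j v) = 0"
proof -
  assume v: "v \<in> V"
  have "dpartial a (\<lambda>z. f (\<phi> z)) v = dpartial a (\<lambda>z. 1) v"
    by (rule dpartial_local[OF oV v]) (simp add: phf)
  then show ?thesis using dpartial_chain[OF f_diff[OF v] ph_diff[OF v]] by (simp add: dpartial_const P_def)
qed

lemma second: "v \<in> V \<Longrightarrow>
   (\<Sum>j\<in>UNIV. (\<Sum>r\<in>UNIV. iter_partial [r, j] f (\<phi> v) * P a r v) * P b j v + dpartial j f (\<phi> v) * P2 a b j v) = 0"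
proof -
  assume v: "v \<in> V"
  have Hd: "(\<lambda>y. dpartial j f y) differentiable (at (\<phi> v))" for j
    using ip_diff[OF phU[OF v], of "[j]"] by simp
  have cd: "(\<lambda>z. dpartial j f (\<phi> z)) differentiable (at v)" for j
    by (rule differentiable_compose[where f="dpartial j f" and g=\<phi>, OF Hd]) (rule differentiableI[OF ph_hd[OF v]])
  have "dpartial a (\<lambda>z. \<Sum>j\<in>UNIV. dpartial j f (\<phi> z) * P b j z) v = dpartial a (\<lambda>z. 0) v"
    by (rule dpartial_local[OF oV v]) (simp add: tangent)
  then have "(\<Sum>j\<in>UNIV. dpartial a (\<lambda>z. dpartial j f (\<phi> z) * P b j z) v) = 0"
    by (subst (asm) dpartial_sum) (auto simp: dpartial_const intro!: differentiable_mult cd P_diff v)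
  moreover have "dpartial a (\<lambda>z. dpartial j f (\<phi> z) * P b j z) v
     = (\<Sum>r\<in>UNIV. iter_partial [r, j] f (\<phi> v) * P a r v) * P b j v + dpartial j f (\<phi> v) * P2 a b j v" for j
  proof -
    have "dpartial a (\<lambda>z. dpartial j f (\<phi> z)) v = (\<Sum>r\<in>UNIV. iter_partial [r, j] f (\<phi> v) * P a r v)"
      using dpartial_chain[OF Hd ph_diff[OF v], of a] by (simp add: P_def)
    then show ?thesis using dpartial_mult[OF cd P_diff[OF v], of a] by (simp add: P2_def)
  qed
  ultimately show ?thesis by simp
qed

lemma LA_inst:
  assumes v: "v \<in> V"
  shows "det (pullback_metric GU \<phi> v) \<noteq> 0"
    and "inner s (matrix_inv (GU (\<phi> v)) *v t) = inner (transpose (Jm v) *v s)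
           (matrix_inv (pullback_metric GU \<phi> v) *v (transpose (Jm v) *v t)) - inner s (\<phi> v) * inner t (\<phi> v)"
proof -
  have x: "\<phi> v \<in> U" using phU[OF v] .
  have symA: "transpose (GU (\<phi> v)) = GU (\<phi> v)" using GU_sym[OF x] by (simp add: transpose_def vec_eq_iff)
  have AN: "(GU (\<phi> v) *v \<phi> v) $ i = - (1 / d) * dpartial i f (\<phi> v)" for i
  proof -
    have "(GU (\<phi> v) *v \<phi> v) $ i = (\<Sum>j\<in>UNIV. \<phi> v $ j * GU (\<phi> v) $ j $ i)"
      by (simp add: matrix_vector_mult_def GU_sym[OF x, of i] mult.commute)
    then show ?thesis using E1[OF x] by simp
  qed
  have gNJ: "transpose (Jm v) *v (GU (\<phi> v) *v \<phi> v) = 0"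
  proof -
    have tJ: "(transpose (Jm v) *v w) $ a = (\<Sum>i\<in>UNIV. P a i v * w $ i)" for w a
      by (simp add: matrix_vector_mult_def transpose_def Jm_def)
    have "(transpose (Jm v) *v (GU (\<phi> v) *v \<phi> v)) $ a = - (1 / d) * (\<Sum>i\<in>UNIV. dpartial i f (\<phi> v) * P a i v)" for a
      unfolding tJ AN by (simp add: sum_distrib_left mult_ac)
    then show ?thesis using tangent[OF v] by (simp add: vec_eq_iff)
  qed
  have gNN: "inner (\<phi> v) (GU (\<phi> v) *v \<phi> v) = -1"
  proof -
    have "inner (\<phi> v) (GU (\<phi> v) *v \<phi> v) = gform GU (\<phi> v) (\<phi> v) (\<phi> v)"
      by (simp add: inner_vec_def gform_def matrix_vector_mult_def sum_distrib_left mult_ac)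
    then show ?thesis using E3[OF x] phf[OF v] by simp
  qed
  note L = LA[OF card GU_det[OF x] symA injJ[OF v] gNJ gNN]
  show "det (pullback_metric GU \<phi> v) \<noteq> 0" using L(1) Gm_matrix[OF v] by simp
  show "inner s (matrix_inv (GU (\<phi> v)) *v t) = inner (transpose (Jm v) *v s)
           (matrix_inv (pullback_metric GU \<phi> v) *v (transpose (Jm v) *v t)) - inner s (\<phi> v) * inner t (\<phi> v)"
    using L(2) Gm_matrix[OF v] by simp
qed

end



lemma vec_hd:
  fixes F :: "real^'m::finite \<Rightarrow> real^'n::finite"
  assumes "\<And>i. ((\<lambda>z. F z $ i) has_derivative (\<lambda>h. F' h $ i)) (at v)"
  shows "(F has_derivative F') (at v)"
proof -
  have "((\<lambda>x. F x \<bullet> b) has_derivative (\<lambda>x. F' x \<bullet> b)) (at v)" if bB: "b \<in> Basis" for b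
  proof -
    obtain r where b: "b = axis r 1" using bB unfolding Basis_vec_def Basis_real_def by blast
    show ?thesis unfolding b inner_axis using assms[of r] by simp
  qed
  then show ?thesis by (subst has_derivative_componentwise_within) blast
qed

lemma nth_hd: "(A has_derivative A') F \<Longrightarrow> ((\<lambda>z. A z $ i) has_derivative (\<lambda>h. A' h $ i)) F"
  by (rule bounded_linear.has_derivative[OF bounded_linear_vec_nth])

definition DG :: "(real^'n::finite \<Rightarrow> real^'n^'n) \<Rightarrow> real^'n \<Rightarrow> real^'n \<Rightarrow> real^'n \<Rightarrow> real^'n \<Rightarrow> real" where
  "DG G y u w z = (\<Sum>i\<in>UNIV. \<Sum>j\<in>UNIV. w$i * (\<Sum>r\<in>UNIV. u$r * dpartial r (\<lambda>y. G y $ i $ j) y) * z$j)"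

lemma gform_comp_hd:
  fixes G :: "real^'n::finite \<Rightarrow> real^'n^'n" and \<phi> A B :: "real^'m::finite \<Rightarrow> real^'n"
  assumes A: "(A has_derivative A') (at v)" and B: "(B has_derivative B') (at v)"
    and ph: "(\<phi> has_derivative \<phi>') (at v)"
    and Gd: "\<And>i j. (\<lambda>z. G z $ i $ j) differentiable (at (\<phi> v))"
  shows "((\<lambda>z. gform G (\<phi> z) (A z) (B z)) has_derivative
     (\<lambda>h. gform G (\<phi> v) (A' h) (B v) + gform G (\<phi> v) (A v) (B' h) + DG G (\<phi> v) (\<phi>' h) (A v) (B v))) (at v)"
proof -
  have Gc: "((\<lambda>z. G (\<phi> z) $ i $ j) has_derivative (\<lambda>h. \<Sum>r\<in>UNIV. \<phi>' h $ r * dpartial r (\<lambda>y. G y $ i $ j) (\<phi> v))) (at v)" for i j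
    using has_derivative_compose[OF ph grad_has_derivative[OF Gd]] by simp
  have "((\<lambda>z. gform G (\<phi> z) (A z) (B z)) has_derivative
     (\<lambda>h. \<Sum>i\<in>UNIV. \<Sum>j\<in>UNIV. (A v $ i * G (\<phi> v) $ i $ j) * B' h $ j
        + (A v $ i * (\<Sum>r\<in>UNIV. \<phi>' h $ r * dpartial r (\<lambda>y. G y $ i $ j) (\<phi> v)) + A' h $ i * G (\<phi> v) $ i $ j) * B v $ j)) (at v)"
    unfolding gform_def
    by (intro has_derivative_sum has_derivative_mult nth_hd A B Gc)
  then show ?thesis
    by (rule has_derivative_eq_rhs)
       (simp add: fun_eq_iff gform_def DG_def algebra_simps sum.distrib)
qed

lemma dC3_gen:
  assumes "\<And>m j k. (\<lambda>y. c1 G y m j k) differentiable (at x)"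
  shows "dpartial i (\<lambda>y. C3 G y w u v) x
   = (\<Sum>m\<in>UNIV. \<Sum>j\<in>UNIV. \<Sum>k\<in>UNIV. w$m * u$j * v$k * dpartial i (\<lambda>y. c1 G y m j k) x)"
  unfolding C3_def
  by (simp add: dpartial_sum dpartial_cmult assms differentiable_sum)

lemma C3_comp_hd:
  fixes G :: "real^'n::finite \<Rightarrow> real^'n^'n" and \<phi> A B C :: "real^'m::finite \<Rightarrow> real^'n"
  assumes A: "(A has_derivative A') (at v)" and B: "(B has_derivative B') (at v)" and C: "(C has_derivative C') (at v)"
    and ph: "(\<phi> has_derivative \<phi>') (at v)"
    and cd: "\<And>m j k. (\<lambda>y. c1 G y m j k) differentiable (at (\<phi> v))"
  shows "((\<lambda>z. C3 G (\<phi> z) (A z) (B z) (C z)) has_derivative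
     (\<lambda>h. C3 G (\<phi> v) (A' h) (B v) (C v) + C3 G (\<phi> v) (A v) (B' h) (C v) + C3 G (\<phi> v) (A v) (B v) (C' h)
        + (\<Sum>r\<in>UNIV. \<phi>' h $ r * dpartial r (\<lambda>y. C3 G y (A v) (B v) (C v)) (\<phi> v)))) (at v)"
proof -
  have cc: "((\<lambda>z. c1 G (\<phi> z) m j k) has_derivative (\<lambda>h. \<Sum>r\<in>UNIV. \<phi>' h $ r * dpartial r (\<lambda>y. c1 G y m j k) (\<phi> v))) (at v)" for m j k
    using has_derivative_compose[OF ph grad_has_derivative[OF cd]] by simp
  have "((\<lambda>z. C3 G (\<phi> z) (A z) (B z) (C z)) has_derivative
     (\<lambda>h. \<Sum>m\<in>UNIV. \<Sum>j\<in>UNIV. \<Sum>k\<in>UNIV.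
        A v $ m * B v $ j * C v $ k * (\<Sum>r\<in>UNIV. \<phi>' h $ r * dpartial r (\<lambda>y. c1 G y m j k) (\<phi> v))
      + (A v $ m * B v $ j * C' h $ k + (A v $ m * B' h $ j + A' h $ m * B v $ j) * C v $ k) * c1 G (\<phi> v) m j k)) (at v)"
    unfolding C3_def
    by (intro has_derivative_sum has_derivative_mult nth_hd A B C cc)
  then show ?thesis
  proof (rule has_derivative_eq_rhs)
    show "(\<lambda>h. \<Sum>m\<in>UNIV. \<Sum>j\<in>UNIV. \<Sum>k\<in>UNIV.
        A v $ m * B v $ j * C v $ k * (\<Sum>r\<in>UNIV. \<phi>' h $ r * dpartial r (\<lambda>y. c1 G y m j k) (\<phi> v))
      + (A v $ m * B v $ j * C' h $ k + (A v $ m * B' h $ j + A' h $ m * B v $ j) * C v $ k) * c1 G (\<phi> v) m j k) =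
      (\<lambda>h. C3 G (\<phi> v) (A' h) (B v) (C v) + C3 G (\<phi> v) (A v) (B' h) (C v) + C3 G (\<phi> v) (A v) (B v) (C' h)
        + (\<Sum>r\<in>UNIV. \<phi>' h $ r * dpartial r (\<lambda>y. C3 G y (A v) (B v) (C v)) (\<phi> v)))"
    proof
      fix h
      have "(\<Sum>r\<in>UNIV. \<phi>' h $ r * dpartial r (\<lambda>y. C3 G y (A v) (B v) (C v)) (\<phi> v))
          = (\<Sum>r\<in>UNIV. \<Sum>m\<in>UNIV. \<Sum>j\<in>UNIV. \<Sum>k\<in>UNIV. \<phi>' h $ r * (A v $ m * B v $ j * C v $ k * dpartial r (\<lambda>y. c1 G y m j k) (\<phi> v)))"
        by (simp add: dC3_gen[OF cd] sum_distrib_left)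
      also have "\<dots> = (\<Sum>m\<in>UNIV. \<Sum>j\<in>UNIV. \<Sum>k\<in>UNIV. \<Sum>r\<in>UNIV. \<phi>' h $ r * (A v $ m * B v $ j * C v $ k * dpartial r (\<lambda>y. c1 G y m j k) (\<phi> v)))"
        by (rule pull4[symmetric])
      finally have e: "(\<Sum>r\<in>UNIV. \<phi>' h $ r * dpartial r (\<lambda>y. C3 G y (A v) (B v) (C v)) (\<phi> v))
          = (\<Sum>m\<in>UNIV. \<Sum>j\<in>UNIV. \<Sum>k\<in>UNIV. A v $ m * B v $ j * C v $ k * (\<Sum>r\<in>UNIV. \<phi>' h $ r * dpartial r (\<lambda>y. c1 G y m j k) (\<phi> v)))"
        by (simp add: sum_distrib_left mult_ac)
      show "(\<Sum>m\<in>UNIV. \<Sum>j\<in>UNIV. \<Sum>k\<in>UNIV.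
        A v $ m * B v $ j * C v $ k * (\<Sum>r\<in>UNIV. \<phi>' h $ r * dpartial r (\<lambda>y. c1 G y m j k) (\<phi> v))
      + (A v $ m * B v $ j * C' h $ k + (A v $ m * B' h $ j + A' h $ m * B v $ j) * C v $ k) * c1 G (\<phi> v) m j k) =
      C3 G (\<phi> v) (A' h) (B v) (C v) + C3 G (\<phi> v) (A v) (B' h) (C v) + C3 G (\<phi> v) (A v) (B v) (C' h)
        + (\<Sum>r\<in>UNIV. \<phi>' h $ r * dpartial r (\<lambda>y. C3 G y (A v) (B v) (C v)) (\<phi> v))"
        unfolding e unfolding C3_def by (simp add: sum.distrib algebra_simps)
    qed
  qed
qed



lemma gform_lin1: "gform G y (\<chi> i. \<Sum>e\<in>UNIV. c e * A e $ i) B = (\<Sum>e\<in>UNIV. c e * gform G y (A e) B)"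
proof -
  have "gform G y (\<chi> i. \<Sum>e\<in>UNIV. c e * A e $ i) B = (\<Sum>i\<in>UNIV. \<Sum>j\<in>UNIV. \<Sum>e\<in>UNIV. c e * (A e $ i * G y $ i $ j * B $ j))"
    unfolding gform_def by (simp add: sum_distrib_right sum_distrib_left mult_ac)
  also have "\<dots> = (\<Sum>e\<in>UNIV. \<Sum>i\<in>UNIV. \<Sum>j\<in>UNIV. c e * (A e $ i * G y $ i $ j * B $ j))" by (rule pull3)
  also have "\<dots> = (\<Sum>e\<in>UNIV. c e * gform G y (A e) B)" unfolding gform_def by (simp add: sum_distrib_left)
  finally show ?thesis .
qed

lemma gform_lin2: "gform G y A (\<chi> i. \<Sum>e\<in>UNIV. c e * B e $ i) = (\<Sum>e\<in>UNIV. c e * gform G y A (B e))"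
proof -
  have "gform G y A (\<chi> i. \<Sum>e\<in>UNIV. c e * B e $ i) = (\<Sum>i\<in>UNIV. \<Sum>j\<in>UNIV. \<Sum>e\<in>UNIV. c e * (A $ i * G y $ i $ j * B e $ j))"
    unfolding gform_def by (simp add: sum_distrib_left mult_ac)
  also have "\<dots> = (\<Sum>e\<in>UNIV. \<Sum>i\<in>UNIV. \<Sum>j\<in>UNIV. c e * (A $ i * G y $ i $ j * B e $ j))" by (rule pull3)
  also have "\<dots> = (\<Sum>e\<in>UNIV. c e * gform G y A (B e))" unfolding gform_def by (simp add: sum_distrib_left)
  finally show ?thesis .
qed

lemma C3_lin1: "C3 G y (\<chi> i. \<Sum>e\<in>UNIV. c e * A e $ i) B D = (\<Sum>e\<in>UNIV. c e * C3 G y (A e) B D)"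
proof -
  have "C3 G y (\<chi> i. \<Sum>e\<in>UNIV. c e * A e $ i) B D = (\<Sum>m\<in>UNIV. \<Sum>j\<in>UNIV. \<Sum>k\<in>UNIV. \<Sum>e\<in>UNIV. c e * (A e $ m * B $ j * D $ k * c1 G y m j k))"
    unfolding C3_def by (simp add: sum_distrib_right sum_distrib_left mult_ac)
  also have "\<dots> = (\<Sum>e\<in>UNIV. \<Sum>m\<in>UNIV. \<Sum>j\<in>UNIV. \<Sum>k\<in>UNIV. c e * (A e $ m * B $ j * D $ k * c1 G y m j k))" by (rule pull4)
  also have "\<dots> = (\<Sum>e\<in>UNIV. c e * C3 G y (A e) B D)" unfolding C3_def by (simp add: sum_distrib_left)
  finally show ?thesis .
qed

lemma C3_lin2: "C3 G y A (\<chi> i. \<Sum>e\<in>UNIV. c e * B e $ i) D = (\<Sum>e\<in>UNIV. c e * C3 G y A (B e) D)"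
proof -
  have "C3 G y A (\<chi> i. \<Sum>e\<in>UNIV. c e * B e $ i) D = (\<Sum>m\<in>UNIV. \<Sum>j\<in>UNIV. \<Sum>k\<in>UNIV. \<Sum>e\<in>UNIV. c e * (A $ m * B e $ j * D $ k * c1 G y m j k))"
    unfolding C3_def by (simp add: sum_distrib_right sum_distrib_left mult_ac)
  also have "\<dots> = (\<Sum>e\<in>UNIV. \<Sum>m\<in>UNIV. \<Sum>j\<in>UNIV. \<Sum>k\<in>UNIV. c e * (A $ m * B e $ j * D $ k * c1 G y m j k))" by (rule pull4)
  also have "\<dots> = (\<Sum>e\<in>UNIV. c e * C3 G y A (B e) D)" unfolding C3_def by (simp add: sum_distrib_left)
  finally show ?thesis .
qed

lemma C3_lin3: "C3 G y A B (\<chi> i. \<Sum>e\<in>UNIV. c e * D e $ i) = (\<Sum>e\<in>UNIV. c e * C3 G y A B (D e))"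
proof -
  have "C3 G y A B (\<chi> i. \<Sum>e\<in>UNIV. c e * D e $ i) = (\<Sum>m\<in>UNIV. \<Sum>j\<in>UNIV. \<Sum>k\<in>UNIV. \<Sum>e\<in>UNIV. c e * (A $ m * B $ j * D e $ k * c1 G y m j k))"
    unfolding C3_def by (simp add: sum_distrib_right sum_distrib_left mult_ac)
  also have "\<dots> = (\<Sum>e\<in>UNIV. \<Sum>m\<in>UNIV. \<Sum>j\<in>UNIV. \<Sum>k\<in>UNIV. c e * (A $ m * B $ j * D e $ k * c1 G y m j k))" by (rule pull4)
  also have "\<dots> = (\<Sum>e\<in>UNIV. c e * C3 G y A B (D e))" unfolding C3_def by (simp add: sum_distrib_left)
  finally show ?thesis .
qed

lemma DG_expand: "DG G y u w z = (\<Sum>m\<in>UNIV. \<Sum>k\<in>UNIV. \<Sum>j\<in>UNIV. w$m * u$j * z$k * dpartial j (\<lambda>y. G y $ m $ k) y)"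
  unfolding DG_def by (simp add: sum_distrib_left sum_distrib_right mult_ac)

lemma C3_DG: "C3 G y w u z = (DG G y u w z + DG G y z w u - DG G y w u z) / 2"
proof -
  have a: "DG G y u w z = (\<Sum>m\<in>UNIV. \<Sum>j\<in>UNIV. \<Sum>k\<in>UNIV. w$m * u$j * z$k * dpartial j (\<lambda>y. G y $ m $ k) y)"
    unfolding DG_expand by (rule sw23)
  have b: "DG G y z w u = (\<Sum>m\<in>UNIV. \<Sum>j\<in>UNIV. \<Sum>k\<in>UNIV. w$m * u$j * z$k * dpartial k (\<lambda>y. G y $ m $ j) y)"
    unfolding DG_expand by (simp add: mult_ac)
  have c: "DG G y w u z = (\<Sum>m\<in>UNIV. \<Sum>j\<in>UNIV. \<Sum>k\<in>UNIV. w$m * u$j * z$k * dpartial m (\<lambda>y. G y $ j $ k) y)"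
  proof -
    have "DG G y w u z = (\<Sum>j\<in>UNIV. \<Sum>k\<in>UNIV. \<Sum>m\<in>UNIV. w$m * u$j * z$k * dpartial m (\<lambda>y. G y $ j $ k) y)"
      unfolding DG_expand by (simp add: mult_ac)
    also have "\<dots> = (\<Sum>m\<in>UNIV. \<Sum>j\<in>UNIV. \<Sum>k\<in>UNIV. w$m * u$j * z$k * dpartial m (\<lambda>y. G y $ j $ k) y)"
      by (rule pull3)
    finally show ?thesis .
  qed
  show ?thesis unfolding a b c C3_def c1_def
    by (simp add: sum_divide_distrib sum.distrib sum_subtractf algebra_simps diff_divide_distrib add_divide_distrib)
qed



lemma gform_sym: "(\<And>i j. G y $ i $ j = G y $ j $ i) \<Longrightarrow> gform G y u w = gform G y w u"
  unfolding gform_def by (subst sum.swap) (simp add: mult_ac)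

context hyp begin

abbreviation "Gm \<equiv> pullback_metric GU \<phi>"
definition "P2v c a v = (\<chi> i. P2 c a i v)"

lemma Pv_hd: "v \<in> V \<Longrightarrow> ((\<lambda>z. Pv a z) has_derivative (\<lambda>h. \<chi> i. \<Sum>c\<in>UNIV. h$c * P2 c a i v)) (at v)"
  by (rule vec_hd) (simp add: Pv_def P2_def grad_has_derivative P_diff)

lemma P2v_hd: "v \<in> V \<Longrightarrow> ((\<lambda>z. P2v a b z) has_derivative (\<lambda>h. \<chi> i. \<Sum>c\<in>UNIV. h$c * dpartial c (\<lambda>z. P2 a b i z) v)) (at v)"
  by (rule vec_hd) (simp add: P2v_def grad_has_derivative P2_diff)

lemma GUd_phi: "v \<in> V \<Longrightarrow> (\<lambda>z. GU z $ i $ j) differentiable (at (\<phi> v))"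
  using GU_diff[OF phU] by blast

lemma axis_P2: "(\<chi> i. \<Sum>c\<in>UNIV. axis e 1 $ c * P2 c a i v) = P2v e a v"
  by (simp add: axis_sum_simp P2v_def)

lemma Gm_hd: "v \<in> V \<Longrightarrow> ((\<lambda>z. gform GU (\<phi> z) (Pv a z) (Pv b z)) has_derivative
   (\<lambda>h. gform GU (\<phi> v) (\<chi> i. \<Sum>c\<in>UNIV. h$c * P2 c a i v) (Pv b v) + gform GU (\<phi> v) (Pv a v) (\<chi> i. \<Sum>c\<in>UNIV. h$c * P2 c b i v)
      + DG GU (\<phi> v) (Jm v *v h) (Pv a v) (Pv b v))) (at v)"
  by (rule gform_comp_hd[OF Pv_hd Pv_hd ph_hd GUd_phi])

lemma dGm: "v \<in> V \<Longrightarrow> dpartial c (\<lambda>z. Gm z $ a $ b) v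
   = gform GU (\<phi> v) (P2v c a v) (Pv b v) + gform GU (\<phi> v) (Pv a v) (P2v c b v) + DG GU (\<phi> v) (Pv c v) (Pv a v) (Pv b v)"
proof -
  assume v: "v \<in> V"
  have "dpartial c (\<lambda>z. Gm z $ a $ b) v = dpartial c (\<lambda>z. gform GU (\<phi> z) (Pv a z) (Pv b z)) v"
    by (rule dpartial_local[OF oV v]) (simp add: Gm_entry)
  also have "\<dots> = gform GU (\<phi> v) (P2v c a v) (Pv b v) + gform GU (\<phi> v) (Pv a v) (P2v c b v) + DG GU (\<phi> v) (Pv c v) (Pv a v) (Pv b v)"
    using dpartial_hd[OF Gm_hd[OF v]] by (simp add: axis_P2 Jm_axis)
  finally show ?thesis .
qed

lemma Gm_diff: "y \<in> V \<Longrightarrow> (\<lambda>z. Gm z $ a $ b) differentiable (at y)"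
proof -
  assume y: "y \<in> V"
  show ?thesis
    by (rule differentiable_local[OF differentiableI[OF Gm_hd[OF y]] oV y]) (simp add: Gm_entry)
qed

lemma dGU_phi_diff: "v \<in> V \<Longrightarrow> (\<lambda>y. dpartial r (\<lambda>z. GU z $ i $ j) (\<phi> y)) differentiable (at v)"
proof -
  assume v: "v \<in> V"
  show ?thesis
    by (rule differentiable_compose[where f="\<lambda>y. dpartial r (\<lambda>z. GU z $ i $ j) y" and g=\<phi>, OF dGU_diff[OF phU[OF v]]])
       (rule differentiableI[OF ph_hd[OF v]])
qed

lemma Pv_nth_diff: "v \<in> V \<Longrightarrow> (\<lambda>z. Pv a z $ i) differentiable (at v)"
  by (simp add: Pv_def P_diff)

lemma dGm_diff: "(\<lambda>y. dpartial c (\<lambda>z. Gm z $ a $ b) y) differentiable (at p)"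
proof -
  have d1: "(\<lambda>y. gform GU (\<phi> y) (P2v c a y) (Pv b y)) differentiable (at p)"
    by (rule differentiableI[OF gform_comp_hd[OF P2v_hd[OF pV] Pv_hd[OF pV] ph_hd[OF pV] GUd_phi[OF pV]]])
  have d2: "(\<lambda>y. gform GU (\<phi> y) (Pv a y) (P2v c b y)) differentiable (at p)"
    by (rule differentiableI[OF gform_comp_hd[OF Pv_hd[OF pV] P2v_hd[OF pV] ph_hd[OF pV] GUd_phi[OF pV]]])
  have d3: "(\<lambda>y. DG GU (\<phi> y) (Pv c y) (Pv a y) (Pv b y)) differentiable (at p)"
    unfolding DG_def
    by (intro differentiable_sum ballI differentiable_mult Pv_nth_diff dGU_phi_diff pV) auto
  have "(\<lambda>y. gform GU (\<phi> y) (P2v c a y) (Pv b y) + gform GU (\<phi> y) (Pv a y) (P2v c b y) + DG GU (\<phi> y) (Pv c y) (Pv a y) (Pv b y))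
     differentiable (at p)" using d1 d2 d3 by simp
  then show ?thesis
    by (rule differentiable_local[OF _ oV pV]) (simp add: dGm)
qed

lemma Gm_sym: "y \<in> V \<Longrightarrow> Gm y $ a $ b = Gm y $ b $ a"
proof -
  assume y: "y \<in> V"
  have "gform GU (\<phi> y) (Pv a y) (Pv b y) = gform GU (\<phi> y) (Pv b y) (Pv a y)"
    by (rule gform_sym) (rule GU_sym[OF phU[OF y]])
  then show ?thesis by (simp add: Gm_entry y)
qed

lemma Gm_metric: "metric_nbhd Gm V p"
  by unfold_locales (auto simp: oV pV Gm_diff Gm_sym dGm_diff LA_inst(1))

end



lemma dir_deriv:
  fixes F :: "real^'n::finite \<Rightarrow> real"
  assumes "(F has_derivative F') (at x)"
  shows "(\<Sum>c\<in>UNIV. h$c * dpartial c F x) = F' h"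
proof -
  have l: "linear F'" using assms has_derivative_linear by blast
  have "F' h = F' (\<Sum>i\<in>UNIV. h$i *\<^sub>R axis i 1)"
    using basis_expansion[of h] by (simp add: scalar_mult_eq_scaleR)
  also have "\<dots> = (\<Sum>i\<in>UNIV. h$i * F' (axis i 1))"
    by (simp add: linear_sum[OF l] linear_scale[OF l])
  finally show ?thesis using dpartial_hd[OF assms] by simp
qed

lemma gform_inner: "gform G y A B = inner A (G y *v B)"
  unfolding gform_def inner_vec_def matrix_vector_mult_def by (simp add: sum_distrib_left mult_ac)

lemma C3_inner: "C3 G y A U W = inner A (Cv G y U W)"
  unfolding C3_def Cv_def inner_vec_def by (simp add: sum_distrib_left mult_ac)

lemma invf_inner: "invf G y s t = inner s (matrix_inv (G y) *v t)"
  unfolding invf_def inner_vec_def matrix_vector_mult_def by (simp add: sum_distrib_left mult_ac)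

context hyp begin

lemma P2v_sym: "v \<in> V \<Longrightarrow> P2v a b v = P2v b a v"
  by (simp add: P2v_def vec_eq_iff P2_sym)

lemma GUs: "v \<in> V \<Longrightarrow> GU (\<phi> v) $ i $ j = GU (\<phi> v) $ j $ i"
  using GU_sym[OF phU] by blast

lemma c1M: "v \<in> V \<Longrightarrow> c1 Gm v e a b = gform GU (\<phi> v) (Pv e v) (P2v a b v) + C3 GU (\<phi> v) (Pv e v) (Pv a v) (Pv b v)"
proof -
  assume v: "v \<in> V"
  note gs = gform_sym[of GU "\<phi> v", OF GUs[OF v]]
  show ?thesis
    unfolding c1_def dGm[OF v] C3_DG[of GU "\<phi> v" "Pv e v"]
    using P2v_sym[OF v, of a e] P2v_sym[OF v, of b e] P2v_sym[OF v, of b a] gs[of "P2v b e v" "Pv a v"]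
      gs[of "P2v e b v" "Pv a v"]
    by (simp add: field_simps)
qed

lemma Jw_eq: "Jm v *v w = (\<chi> i. \<Sum>e\<in>UNIV. w$e * Pv e v $ i)"
  by (simp add: Jm_def Pv_def matrix_vector_mult_def vec_eq_iff mult.commute)

lemma Phi2_eq: "Phi2 v u z = (\<chi> i. \<Sum>a\<in>UNIV. u$a * (\<chi> i. \<Sum>b\<in>UNIV. z$b * P2v a b v $ i) $ i)"
  by (simp add: Phi2_def P2v_def vec_eq_iff sum_distrib_left mult_ac)

lemma C3M: "v \<in> V \<Longrightarrow> C3 Gm v w u z = gform GU (\<phi> v) (Jm v *v w) (Phi2 v u z) + C3 GU (\<phi> v) (Jm v *v w) (Jm v *v u) (Jm v *v z)"
proof -
  assume v: "v \<in> V"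
  have "C3 Gm v w u z = (\<Sum>e\<in>UNIV. w$e * (\<Sum>a\<in>UNIV. u$a * (\<Sum>b\<in>UNIV. z$b *
      (gform GU (\<phi> v) (Pv e v) (P2v a b v) + C3 GU (\<phi> v) (Pv e v) (Pv a v) (Pv b v)))))"
    unfolding C3_def c1M[OF v] by (simp add: sum_distrib_left mult_ac)
  also have "\<dots> = gform GU (\<phi> v) (Jm v *v w) (Phi2 v u z) + C3 GU (\<phi> v) (Jm v *v w) (Jm v *v u) (Jm v *v z)"
    unfolding Jw_eq Phi2_eq
    unfolding gform_lin1 C3_lin1
    unfolding gform_lin2 C3_lin2
    unfolding C3_lin3
    by (simp add: distrib_left sum.distrib)
  finally show ?thesis .
qed

end



lemma Cv_axis: "Cv G y u w $ l = C3 G y (axis l 1) u w"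
proof -
  have "C3 G y (axis l 1) u w = (\<Sum>m\<in>UNIV. axis l 1 $ m * (\<Sum>j\<in>UNIV. \<Sum>k\<in>UNIV. u$j * w$k * c1 G y m j k))"
    unfolding C3_def by (simp add: sum_distrib_left mult_ac)
  also have "\<dots> = (\<Sum>j\<in>UNIV. \<Sum>k\<in>UNIV. u$j * w$k * c1 G y l j k)" by (rule axis_sum_simp)
  finally show ?thesis by (simp add: Cv_def)
qed

lemma tJ_nth: "(transpose J *v t) $ l = inner (column l J) t"
  by (simp add: matrix_vector_mult_def transpose_def column_def inner_vec_def mult.commute)

context hyp begin

lemma column_Jm: "column l (Jm v) = Pv l v"
  by (simp add: column_def Jm_def Pv_def vec_eq_iff)

lemma CvM: "v \<in> V \<Longrightarrow> Cv Gm v u w = transpose (Jm v) *v (GU (\<phi> v) *v Phi2 v u w + Cv GU (\<phi> v) (Jm v *v u) (Jm v *v w))"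
proof -
  assume v: "v \<in> V"
  show ?thesis unfolding vec_eq_iff
  proof
    fix l
    show "Cv Gm v u w $ l = (transpose (Jm v) *v (GU (\<phi> v) *v Phi2 v u w + Cv GU (\<phi> v) (Jm v *v u) (Jm v *v w))) $ l"
      unfolding Cv_axis unfolding C3M[OF v] unfolding tJ_nth column_Jm Jm_axis gform_inner C3_inner
      by (simp add: inner_add_right)
  qed
qed

lemma Jw_hd: "v \<in> V \<Longrightarrow> ((\<lambda>y. Jm y *v w) has_derivative (\<lambda>h. Phi2 v h w)) (at v)"
proof -
  assume v: "v \<in> V"
  show ?thesis
  proof (rule vec_hd)
    fix i
    have "((\<lambda>z. \<Sum>b\<in>UNIV. P b i z * w$b) has_derivative (\<lambda>h. \<Sum>b\<in>UNIV. (\<Sum>c\<in>UNIV. h$c * P2 c b i v) * w$b)) (at v)"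
      by (intro has_derivative_sum has_derivative_mult_left)
         (simp add: P2_def grad_has_derivative P_diff[OF v])
    moreover have "(\<lambda>h. \<Sum>b\<in>UNIV. (\<Sum>c\<in>UNIV. h$c * P2 c b i v) * w$b) = (\<lambda>h. Phi2 v h w $ i)"
    proof
      fix h
      have "(\<Sum>b\<in>UNIV. (\<Sum>c\<in>UNIV. h$c * P2 c b i v) * w$b) = (\<Sum>b\<in>UNIV. \<Sum>c\<in>UNIV. h$c * w$b * P2 c b i v)"
        by (simp add: sum_distrib_right sum_distrib_left mult_ac)
      also have "\<dots> = (\<Sum>c\<in>UNIV. \<Sum>b\<in>UNIV. h$c * w$b * P2 c b i v)" by (rule sum.swap)
      finally show "(\<Sum>b\<in>UNIV. (\<Sum>c\<in>UNIV. h$c * P2 c b i v) * w$b) = Phi2 v h w $ i" by (simp add: Phi2_def)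
    qed
    ultimately show "((\<lambda>z. (Jm z *v w) $ i) has_derivative (\<lambda>h. Phi2 v h w $ i)) (at v)"
      by (simp add: Jm_def matrix_vector_mult_def)
  qed
qed

lemma Phi2_hd: "v \<in> V \<Longrightarrow> ((\<lambda>y. Phi2 y u w) has_derivative (\<lambda>h. Phi3 v h u w)) (at v)"
proof -
  assume v: "v \<in> V"
  show ?thesis
  proof (rule vec_hd)
    fix i
    have "((\<lambda>z. \<Sum>a\<in>UNIV. \<Sum>b\<in>UNIV. u$a * w$b * P2 a b i z) has_derivative
        (\<lambda>h. \<Sum>a\<in>UNIV. \<Sum>b\<in>UNIV. u$a * w$b * (\<Sum>c\<in>UNIV. h$c * dpartial c (\<lambda>z. P2 a b i z) v))) (at v)"
      by (intro has_derivative_sum has_derivative_mult_right grad_has_derivative P2_diff[OF v])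
    moreover have "(\<lambda>h. \<Sum>a\<in>UNIV. \<Sum>b\<in>UNIV. u$a * w$b * (\<Sum>c\<in>UNIV. h$c * dpartial c (\<lambda>z. P2 a b i z) v)) = (\<lambda>h. Phi3 v h u w $ i)"
    proof
      fix h
      have "(\<Sum>a\<in>UNIV. \<Sum>b\<in>UNIV. u$a * w$b * (\<Sum>c\<in>UNIV. h$c * dpartial c (\<lambda>z. P2 a b i z) v))
          = (\<Sum>a\<in>UNIV. \<Sum>b\<in>UNIV. \<Sum>c\<in>UNIV. h$c * u$a * w$b * dpartial c (\<lambda>z. P2 a b i z) v)"
        by (simp add: sum_distrib_left mult_ac)
      also have "\<dots> = (\<Sum>c\<in>UNIV. \<Sum>a\<in>UNIV. \<Sum>b\<in>UNIV. h$c * u$a * w$b * dpartial c (\<lambda>z. P2 a b i z) v)" by (rule pull3)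
      finally show "(\<Sum>a\<in>UNIV. \<Sum>b\<in>UNIV. u$a * w$b * (\<Sum>c\<in>UNIV. h$c * dpartial c (\<lambda>z. P2 a b i z) v)) = Phi3 v h u w $ i"
        by (simp add: Phi3_def)
    qed
    ultimately show "((\<lambda>z. Phi2 z u w $ i) has_derivative (\<lambda>h. Phi3 v h u w $ i)) (at v)"
      by (simp add: Phi2_def)
  qed
qed

lemma c1GU_phi: "v \<in> V \<Longrightarrow> (\<lambda>y. c1 GU y m j k) differentiable (at (\<phi> v))"
  using metric_nbhd.c1_diff[OF GU_metric[OF phU]] by blast

definition "dC3M x w u z = gform GU (\<phi> p) (Phi2 p x w) (Phi2 p u z) + gform GU (\<phi> p) (Jm p *v w) (Phi3 p x u z)
   + DG GU (\<phi> p) (Jm p *v x) (Jm p *v w) (Phi2 p u z)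
   + C3 GU (\<phi> p) (Phi2 p x w) (Jm p *v u) (Jm p *v z) + C3 GU (\<phi> p) (Jm p *v w) (Phi2 p x u) (Jm p *v z)
   + C3 GU (\<phi> p) (Jm p *v w) (Jm p *v u) (Phi2 p x z)
   + (\<Sum>r\<in>UNIV. (Jm p *v x) $ r * dpartial r (\<lambda>y. C3 GU y (Jm p *v w) (Jm p *v u) (Jm p *v z)) (\<phi> p))"

lemma dC3M: "(\<Sum>c\<in>UNIV. x$c * dpartial c (\<lambda>y. C3 Gm y w u z) p) = dC3M x w u z"
proof -
  have hd: "((\<lambda>y. gform GU (\<phi> y) (Jm y *v w) (Phi2 y u z) + C3 GU (\<phi> y) (Jm y *v w) (Jm y *v u) (Jm y *v z)) has_derivative
     (\<lambda>h. (gform GU (\<phi> p) (Phi2 p h w) (Phi2 p u z) + gform GU (\<phi> p) (Jm p *v w) (Phi3 p h u z)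
       + DG GU (\<phi> p) (Jm p *v h) (Jm p *v w) (Phi2 p u z))
      + (C3 GU (\<phi> p) (Phi2 p h w) (Jm p *v u) (Jm p *v z) + C3 GU (\<phi> p) (Jm p *v w) (Phi2 p h u) (Jm p *v z)
       + C3 GU (\<phi> p) (Jm p *v w) (Jm p *v u) (Phi2 p h z)
       + (\<Sum>r\<in>UNIV. (Jm p *v h) $ r * dpartial r (\<lambda>y. C3 GU y (Jm p *v w) (Jm p *v u) (Jm p *v z)) (\<phi> p))))) (at p)"
    by (intro has_derivative_add gform_comp_hd[OF Jw_hd[OF pV] Phi2_hd[OF pV] ph_hd[OF pV] GUd_phi[OF pV]]
        C3_comp_hd[OF Jw_hd[OF pV] Jw_hd[OF pV] Jw_hd[OF pV] ph_hd[OF pV] c1GU_phi[OF pV]])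
  have "(\<Sum>c\<in>UNIV. x$c * dpartial c (\<lambda>y. C3 Gm y w u z) p)
      = (\<Sum>c\<in>UNIV. x$c * dpartial c (\<lambda>y. gform GU (\<phi> y) (Jm y *v w) (Phi2 y u z) + C3 GU (\<phi> y) (Jm y *v w) (Jm y *v u) (Jm y *v z)) p)"
    by (intro sum.cong refl arg_cong2[where f="(*)"] dpartial_local[OF oV pV]) (simp add: C3M)
  also have "\<dots> = dC3M x w u z" unfolding dir_deriv[OF hd] dC3M_def by (simp add: algebra_simps)
  finally show ?thesis .
qed

end



context metric_nbhd begin

lemma C3_sym: "C3 G x w u z = C3 G x w z u"
proof -
  have "C3 G x w u z = (\<Sum>m\<in>UNIV. \<Sum>k\<in>UNIV. \<Sum>j\<in>UNIV. w$m * u$j * z$k * c1 G x m j k)"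
    unfolding C3_def by (rule sw23)
  also have "\<dots> = C3 G x w z u" unfolding C3_def by (simp add: c1_sym[of _ _ k for k] mult_ac)
  finally show ?thesis .
qed

lemma DG_C3: "DG G x u w z = C3 G x w u z + C3 G x z u w"
proof -
  have "DG G x u w z = (\<Sum>m\<in>UNIV. \<Sum>k\<in>UNIV. \<Sum>j\<in>UNIV. w$m * u$j * z$k * c1 G x m j k)
       + (\<Sum>m\<in>UNIV. \<Sum>k\<in>UNIV. \<Sum>j\<in>UNIV. w$m * u$j * z$k * c1 G x k j m)"
    unfolding DG_expand dG_c1 by (simp add: algebra_simps sum.distrib)
  moreover have "(\<Sum>m\<in>UNIV. \<Sum>k\<in>UNIV. \<Sum>j\<in>UNIV. w$m * u$j * z$k * c1 G x m j k) = C3 G x w u z"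
    unfolding C3_def by (rule sw23)
  moreover have "(\<Sum>m\<in>UNIV. \<Sum>k\<in>UNIV. \<Sum>j\<in>UNIV. w$m * u$j * z$k * c1 G x k j m) = C3 G x z u w"
  proof -
    have "(\<Sum>m\<in>UNIV. \<Sum>k\<in>UNIV. \<Sum>j\<in>UNIV. w$m * u$j * z$k * c1 G x k j m)
        = (\<Sum>k\<in>UNIV. \<Sum>m\<in>UNIV. \<Sum>j\<in>UNIV. w$m * u$j * z$k * c1 G x k j m)" by (rule sum.swap)
    also have "\<dots> = (\<Sum>k\<in>UNIV. \<Sum>j\<in>UNIV. \<Sum>m\<in>UNIV. w$m * u$j * z$k * c1 G x k j m)"
      by (rule sum.cong[OF refl], rule sum.swap)
    also have "\<dots> = C3 G x z u w" unfolding C3_def by (simp add: mult_ac)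
    finally show ?thesis .
  qed
  ultimately show ?thesis by simp
qed

lemma invf_T:
  assumes "\<And>i j. G x $ i $ j = G x $ j $ i"
  shows "inner (G x *v s + c) (matrix_inv (G x) *v (G x *v s' + c'))
    = gform G x s s' + inner s c' + inner s' c + invf G x c c'"
proof -
  have dx: "det (G x) \<noteq> 0" using Gdet S by blast
  have sym: "inner (G x *v s) t = inner s (G x *v t)" for t
  proof -
    have "transpose (G x) = G x" using assms by (simp add: transpose_def vec_eq_iff)
    then show ?thesis using dotJ[of "G x" s t] by simp
  qed
  have "matrix_inv (G x) *v (G x *v s' + c') = s' + matrix_inv (G x) *v c'"
    by (simp add: matrix_vector_right_distrib inv_mul_cancel(1)[OF dx])
  then have "inner (G x *v s + c) (matrix_inv (G x) *v (G x *v s' + c'))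
     = inner (G x *v s) s' + inner (G x *v s) (matrix_inv (G x) *v c') + inner c s' + inner c (matrix_inv (G x) *v c')"
    by (simp add: inner_add_left inner_add_right)
  also have "\<dots> = gform G x s s' + inner s c' + inner s' c + invf G x c c'"
    unfolding sym gform_inner invf_inner inv_mul_cancel(2)[OF dx] by (simp add: inner_commute)
  finally show ?thesis .
qed

end

context hyp begin

lemma Phi2_sym: "v \<in> V \<Longrightarrow> Phi2 v u w = Phi2 v w u"
proof -
  assume v: "v \<in> V"
  have "(\<Sum>a\<in>UNIV. \<Sum>b\<in>UNIV. u$a * w$b * P2 a b i v) = (\<Sum>b\<in>UNIV. \<Sum>a\<in>UNIV. u$a * w$b * P2 a b i v)" for i
    by (rule sum.swap)
  also have "\<dots> i = (\<Sum>b\<in>UNIV. \<Sum>a\<in>UNIV. w$b * u$a * P2 b a i v)" for i by (simp add: P2_sym[OF v] mult_ac)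
  finally show ?thesis by (simp add: Phi2_def vec_eq_iff)
qed

lemma P3_sym: "dpartial c (\<lambda>z. P2 a b i z) p = dpartial a (\<lambda>z. P2 c b i z) p"
  unfolding P2_def
  by (rule clairaut[OF oV pV P_diff])
     (use P2_diff[OF pV, of a b i] P2_diff[OF pV, of c b i] in \<open>simp_all add: P2_def[abs_def]\<close>)

lemma Phi3_sym: "Phi3 p x u w = Phi3 p u x w"
proof -
  have "(\<Sum>c\<in>UNIV. \<Sum>a\<in>UNIV. \<Sum>b\<in>UNIV. x$c * u$a * w$b * dpartial c (\<lambda>z. P2 a b i z) p)
      = (\<Sum>a\<in>UNIV. \<Sum>c\<in>UNIV. \<Sum>b\<in>UNIV. x$c * u$a * w$b * dpartial c (\<lambda>z. P2 a b i z) p)" for i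
    by (rule sum.swap)
  also have "\<dots> i = (\<Sum>a\<in>UNIV. \<Sum>c\<in>UNIV. \<Sum>b\<in>UNIV. u$a * x$c * w$b * dpartial a (\<lambda>z. P2 c b i z) p)" for i
    by (simp add: P3_sym[of _ _ _ i] mult_ac)
  finally show ?thesis by (simp add: Phi3_def vec_eq_iff)
qed

lemma GMp: "metric_nbhd GU U (\<phi> p)" using GU_metric[OF phU[OF pV]] .

lemma gform_M: "gform Gm p u w = gform GU (\<phi> p) (Jm p *v u) (Jm p *v w)"
proof -
  have "gform Gm p u w = (\<Sum>a\<in>UNIV. u$a * (\<Sum>b\<in>UNIV. w$b * gform GU (\<phi> p) (Pv a p) (Pv b p)))"
    unfolding gform_def[of Gm] by (simp add: Gm_entry[OF pV] sum_distrib_left mult_ac)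
  also have "\<dots> = gform GU (\<phi> p) (Jm p *v u) (Jm p *v w)"
    unfolding Jw_eq unfolding gform_lin1 unfolding gform_lin2 ..
  finally show ?thesis .
qed

end



context hyp begin

abbreviation "x0 \<equiv> \<phi> p"

lemma x0U: "x0 \<in> U" using phU[OF pV] .

lemma g_hess: "gform GU y u w = \<kappa> * gform (hessian f) y u w"
  unfolding gform_def by (simp add: GU_entry hessian_def sum_distrib_left mult_ac)

lemma second_c: "(\<Sum>j\<in>UNIV. dpartial j f x0 * Phi2 p u w $ j) = - gform (hessian f) x0 (Jm p *v u) (Jm p *v w)"
proof -
  have sec: "(\<Sum>j\<in>UNIV. dpartial j f x0 * P2 a b j p) = - gform (hessian f) x0 (Pv a p) (Pv b p)" for a b
  proof -
    have "gform (hessian f) x0 (Pv a p) (Pv b p) = (\<Sum>r\<in>UNIV. \<Sum>j\<in>UNIV. P a r p * iter_partial [r, j] f x0 * P b j p)"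
      by (simp add: gform_def hessian_def Pv_def)
    also have "\<dots> = (\<Sum>j\<in>UNIV. \<Sum>r\<in>UNIV. P a r p * iter_partial [r, j] f x0 * P b j p)" by (rule sum.swap)
    also have "\<dots> = (\<Sum>j\<in>UNIV. (\<Sum>r\<in>UNIV. iter_partial [r, j] f x0 * P a r p) * P b j p)"
      by (simp add: sum_distrib_right sum_distrib_left mult_ac)
    finally show ?thesis using second[OF pV, of a b] by (simp add: sum.distrib)
  qed
  have "(\<Sum>j\<in>UNIV. dpartial j f x0 * Phi2 p u w $ j) = (\<Sum>j\<in>UNIV. \<Sum>a\<in>UNIV. \<Sum>b\<in>UNIV. u$a * w$b * (dpartial j f x0 * P2 a b j p))"
    by (simp add: Phi2_def sum_distrib_left mult_ac)
  also have "\<dots> = (\<Sum>a\<in>UNIV. \<Sum>b\<in>UNIV. \<Sum>j\<in>UNIV. u$a * w$b * (dpartial j f x0 * P2 a b j p))" by (rule pull3[symmetric])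
  also have "\<dots> = (\<Sum>a\<in>UNIV. u$a * (\<Sum>b\<in>UNIV. w$b * (- gform (hessian f) x0 (Pv a p) (Pv b p))))"
    by (simp add: sum_distrib_left[symmetric] sec mult.assoc) (simp add: sum_distrib_left sum_negf)
  also have "\<dots> = - gform (hessian f) x0 (Jm p *v u) (Jm p *v w)"
    unfolding Jw_eq unfolding gform_lin1 unfolding gform_lin2 by (simp add: sum_negf)
  finally show ?thesis .
qed

definition "T u w = GU x0 *v Phi2 p u w + Cv GU x0 (Jm p *v u) (Jm p *v w)"

lemma T_x0: "inner (T u w) x0 = - (d / 2) * gform GU x0 (Jm p *v u) (Jm p *v w)"
proof -
  have a: "inner (GU x0 *v Phi2 p u w) x0 = - (1 / d) * (\<Sum>j\<in>UNIV. dpartial j f x0 * Phi2 p u w $ j)"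
  proof -
    have "inner (GU x0 *v Phi2 p u w) x0 = (\<Sum>j\<in>UNIV. Phi2 p u w $ j * (\<Sum>i\<in>UNIV. x0$i * GU x0 $ i $ j))"
      unfolding inner_vec_def matrix_vector_mult_def
      by (simp add: sum_distrib_left sum_distrib_right mult_ac) (rule sum.swap)
    also have "\<dots> = - (1 / d) * (\<Sum>j\<in>UNIV. dpartial j f x0 * Phi2 p u w $ j)"
      by (simp add: E1[OF x0U] sum_distrib_left mult_ac)
    finally show ?thesis .
  qed
  have c: "inner (Cv GU x0 (Jm p *v u) (Jm p *v w)) x0 = (d - 2) / 2 * gform GU x0 (Jm p *v u) (Jm p *v w)"
    using C3_inner[of GU x0 x0 "Jm p *v u" "Jm p *v w"] E2[OF x0U] by (simp add: inner_commute)
  have "inner (T u w) x0 = (1 / d) * gform (hessian f) x0 (Jm p *v u) (Jm p *v w)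
       + (d - 2) / 2 * gform GU x0 (Jm p *v u) (Jm p *v w)"
    unfolding T_def inner_add_left a c second_c by simp
  also have "\<dots> = - (d / 2) * gform GU x0 (Jm p *v u) (Jm p *v w)"
    unfolding g_hess using d1 by (simp add: \<kappa>_def field_simps)
  finally show ?thesis .
qed

end



context hyp begin

lemma GUsx: "GU x0 $ i $ j = GU x0 $ j $ i" using GU_sym[OF x0U] .

lemma quadM: "invf Gm p (Cv Gm p u w) (Cv Gm p u' w')
  = gform GU x0 (Phi2 p u w) (Phi2 p u' w') + C3 GU x0 (Phi2 p u w) (Jm p *v u') (Jm p *v w')
    + C3 GU x0 (Phi2 p u' w') (Jm p *v u) (Jm p *v w)
    + invf GU x0 (Cv GU x0 (Jm p *v u) (Jm p *v w)) (Cv GU x0 (Jm p *v u') (Jm p *v w'))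
    + inner (T u w) x0 * inner (T u' w') x0"
proof -
  have "invf Gm p (Cv Gm p u w) (Cv Gm p u' w') = inner (T u w) (matrix_inv (GU x0) *v T u' w') + inner (T u w) x0 * inner (T u' w') x0"
    unfolding invf_inner CvM[OF pV] T_def[symmetric] using LA_inst(2)[OF pV, of "T u w" "T u' w'"] by simp
  also have "inner (T u w) (matrix_inv (GU x0) *v T u' w')
     = gform GU x0 (Phi2 p u w) (Phi2 p u' w') + C3 GU x0 (Phi2 p u w) (Jm p *v u') (Jm p *v w')
       + C3 GU x0 (Phi2 p u' w') (Jm p *v u) (Jm p *v w)
       + invf GU x0 (Cv GU x0 (Jm p *v u) (Jm p *v w)) (Cv GU x0 (Jm p *v u') (Jm p *v w'))"
    unfolding T_def metric_nbhd.invf_T[OF GMp GUsx] C3_inner ..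
  finally show ?thesis .
qed

lemma numM:
  fixes a b :: "real^'m"
  defines "X \<equiv> Jm p *v a" and "Y \<equiv> Jm p *v b"
  shows "gform Gm p (curv_vec Gm p a b b) a = gform GU x0 (curv_vec GU x0 X Y Y) X
     - d\<^sup>2 / 4 * (gform GU x0 X X * gform GU x0 Y Y - (gform GU x0 X Y)\<^sup>2)"
proof -
  note RM = metric_nbhd.RL_sect[OF Gm_metric, of a b]
  note RU = metric_nbhd.RL_sect[OF GMp, of X Y]
  note DGC = metric_nbhd.DG_C3[OF GMp]
  have gs: "gform GU x0 Y X = gform GU x0 X Y" by (rule gform_sym[where G=GU and y=x0]) (rule GUsx)
  have ba: "Phi2 p b a = Phi2 p a b" by (rule Phi2_sym[OF pV])
  have p3: "Phi3 p b a b = Phi3 p a b b" by (rule Phi3_sym)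
  show ?thesis
    unfolding RM RU dC3M quadM dC3M_def DGC T_x0 ba p3 X_def[symmetric] Y_def[symmetric] gs
    by (simp add: algebra_simps power2_eq_square)
qed

end



context hyp begin

lemma sectM:
  assumes nd: "nondeg_plane GU x0 (Jm p *v a) (Jm p *v b)"
  shows "sectional_curvature Gm p a b = sectional_curvature GU x0 (Jm p *v a) (Jm p *v b) - d\<^sup>2 / 4"
proof -
  define X where "X = Jm p *v a"
  define Y where "Y = Jm p *v b"
  define den where "den = gform GU x0 X X * gform GU x0 Y Y - (gform GU x0 X Y)\<^sup>2"
  have den: "den \<noteq> 0" using nd unfolding nondeg_plane_def den_def X_def Y_def .
  have "sectional_curvature Gm p a b = (gform GU x0 (curv_vec GU x0 X Y Y) X - d\<^sup>2 / 4 * den) / den"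
    unfolding sectional_curvature_def unfolding numM unfolding gform_M X_def Y_def den_def ..
  also have "\<dots> = gform GU x0 (curv_vec GU x0 X Y Y) X / den - d\<^sup>2 / 4"
    using den by (simp add: field_simps)
  also have "\<dots> = sectional_curvature GU x0 X Y - d\<^sup>2 / 4"
    unfolding sectional_curvature_def den_def ..
  finally show ?thesis unfolding X_def Y_def .
qed

lemma main:
  assumes nd: "nondeg_plane GU x0 (frechet_derivative \<phi> (at p) a) (frechet_derivative \<phi> (at p) b)"
    and c: "c > 0"
  shows "sectional_curvature GU (c *\<^sub>R x0) (c *\<^sub>R frechet_derivative \<phi> (at p) a) (c *\<^sub>R frechet_derivative \<phi> (at p) b)
       = (1 / c powr d) * (sectional_curvature Gm p a b + d\<^sup>2 / 4)"
  using nd unfolding fd[OF pV] sect_scale[OF x0U c] by (simp add: sectM)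

end

theorem corollary2p2:
  fixes U :: "(real^'n) set" and f :: "real^'n \<Rightarrow> real" and d c :: real
    and V :: "(real^'m) set" and \<phi> :: "real^'m \<Rightarrow> real^'n" and p a b :: "real^'m"
  assumes "CARD('n) \<ge> 3" and "CARD('n) = CARD('m) + 1"
    and "open_cone U"
    and "smooth_on U f"
    and "d > 1"
    and "\<forall>x\<in>U. \<forall>t::real. t > 0 \<longrightarrow> f (t *\<^sub>R x) = t powr d * f x"
    and "\<forall>x\<in>U. f x > 0"
    and "\<forall>x\<in>U. det (hessian f x) \<noteq> 0"
    and "local_param (level_set U f) V \<phi>"
    and "p \<in> V"
    and "nondeg_plane (hess_metric d f) (\<phi> p)
           (frechet_derivative \<phi> (at p) a) (frechet_derivative \<phi> (at p) b)"
    and "c > 0"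
  shows "sectional_curvature (hess_metric d f) (c *\<^sub>R \<phi> p)
           (c *\<^sub>R frechet_derivative \<phi> (at p) a) (c *\<^sub>R frechet_derivative \<phi> (at p) b)
         = (1 / c powr d) * (sectional_curvature (pullback_metric (hess_metric d f) \<phi>) p a b + d\<^sup>2 / 4)"
proof -
  interpret H: hyp U f d V \<phi> p
    by unfold_locales (use assms in auto)
  show ?thesis by (rule H.main) (use assms in auto)
qed


end
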